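(* Let $k$ be a field, $\Gamma=(V,E)$ a finite connected quiver, and let $I\subseteq R^2$ be an ideal of $k\Gamma$ generated by paths such that $k\Gamma/I$ is complete and acyclic. Then $\dim_k HH^1(k\Gamma/I)=|\overline{\mathfrak{B}}_2|+1-|V|$, where $\overline{\mathfrak{B}}_2=\{\overline{D}_{r,\overline{s}}\mid r\in E,\ \overline{s}\in\mathscr{Q},\ r\parallel\overline{s}\}$.
   Context: For a path $p$, $t(p),h(p)$ are its start and end vertex; paths multiply by left-to-right concatenation (product $0$ if they do not concatenate). $R$ is the ideal generated by $E$, $\overline{x}=x+I$. $\mathscr{Q}$ is the set of residue classes of paths not in $I$ (a $k$-basis of $k\Gamma/I$); for $\overline{s}\in\mathscr{Q}$ the class of $s\notin I$, $t(\overline{s})=t(s)$, $h(\overline{s})=h(s)$, and $r\parallel\overline{s}$ means $t(r)=t(s)$, $h(r)=h(s)$. $k\Gamma/I$ is complete if for any two parallel paths $p,p'$, $p\in I$ implies $p'\in I$; it is acyclic if every path $p\notin I$ with $t(p)=h(p)$ is a vertex. $HH^1(k\Gamma/I)$ is the space of derivations of $k\Gamma/I$ modulo inner derivations. $\overline{D}_{r,\overline{s}}$ is the derivation of $k\Gamma/I$ induced by the unique $k$-linear map $D_{r,\overline{s}}:k\Gamma\to k\Gamma/I$ satisfying $D(xy)=D(x)\overline{y}+\overline{x}D(y)$, $D_{r,\overline{s}}(r)=\overline{s}$, and vanishing on all other arrows and vertices (this map vanishes on $I$ under the completeness hypothesis). *)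

theory Defs
  imports Main HOL.Vector_Spaces "HOL-Library.Function_Algebras"
begin

(* A path of the quiver (V,E,src,tgt): a start vertex together with a list of
   composable arrows (left-to-right). (v,[]) is the trivial path e_v. *)
type_synonym ('v,'e) qpath = "'v \<times> 'e list"

(* elements of k Gamma / I are represented by their coefficient functions on paths *)
type_synonym ('v,'e,'k) qmap = "(('v,'e) qpath \<Rightarrow> 'k) \<Rightarrow> (('v,'e) qpath \<Rightarrow> 'k)"

definition is_path :: "'v set \<Rightarrow> 'e set \<Rightarrow> ('e \<Rightarrow> 'v) \<Rightarrow> ('e \<Rightarrow> 'v) \<Rightarrow> ('v,'e) qpath \<Rightarrow> bool" where
  "is_path V E src tgt p \<longleftrightarrow> fst p \<in> V \<and> set (snd p) \<subseteq> E \<and>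
     (snd p \<noteq> [] \<longrightarrow> src (hd (snd p)) = fst p) \<and>
     (\<forall>i. Suc i < length (snd p) \<longrightarrow> tgt (snd p ! i) = src (snd p ! Suc i))"

definition pstart :: "('v,'e) qpath \<Rightarrow> 'v" where
  "pstart p = fst p"

definition pend :: "('e \<Rightarrow> 'v) \<Rightarrow> ('v,'e) qpath \<Rightarrow> 'v" where
  "pend tgt p = (if snd p = [] then fst p else tgt (last (snd p)))"

definition pconcat :: "('v,'e) qpath \<Rightarrow> ('v,'e) qpath \<Rightarrow> ('v,'e) qpath" where
  "pconcat p q = (fst p, snd p @ snd q)"

definition plen :: "('v,'e) qpath \<Rightarrow> nat" where
  "plen p = length (snd p)"

definition pfx :: "nat \<Rightarrow> ('v,'e) qpath \<Rightarrow> ('v,'e) qpath" where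
  "pfx i p = (fst p, take i (snd p))"

definition sfx :: "('e \<Rightarrow> 'v) \<Rightarrow> nat \<Rightarrow> ('v,'e) qpath \<Rightarrow> ('v,'e) qpath" where
  "sfx tgt i p = (if i = 0 then fst p else tgt (snd p ! (i - 1)), drop i (snd p))"

definition vpath :: "'v \<Rightarrow> ('v,'e) qpath" where
  "vpath v = (v, [])"

definition apath :: "('e \<Rightarrow> 'v) \<Rightarrow> 'e \<Rightarrow> ('v,'e) qpath" where
  "apath src e = (src e, [e])"

definition finite_quiver :: "'v set \<Rightarrow> 'e set \<Rightarrow> ('e \<Rightarrow> 'v) \<Rightarrow> ('e \<Rightarrow> 'v) \<Rightarrow> bool" where
  "finite_quiver V E src tgt \<longleftrightarrow> finite V \<and> finite E \<and> (\<forall>e\<in>E. src e \<in> V \<and> tgt e \<in> V)"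

definition connected_quiver :: "'v set \<Rightarrow> 'e set \<Rightarrow> ('e \<Rightarrow> 'v) \<Rightarrow> ('e \<Rightarrow> 'v) \<Rightarrow> bool" where
  "connected_quiver V E src tgt \<longleftrightarrow> V \<noteq> {} \<and>
     (\<forall>u\<in>V. \<forall>w\<in>V. (u, w) \<in> ({(src e, tgt e) | e. e \<in> E} \<union> {(tgt e, src e) | e. e \<in> E})\<^sup>*)"

(* An ideal I of k Gamma generated by paths is determined by the set Ip of paths lying in I
   (I = span Ip, Ip closed under left/right multiplication by paths).
   I \<subseteq> R^2 means every path in I has length at least 2. *)
definition path_ideal_in_R2 :: "'v set \<Rightarrow> 'e set \<Rightarrow> ('e \<Rightarrow> 'v) \<Rightarrow> ('e \<Rightarrow> 'v) \<Rightarrow> ('v,'e) qpath set \<Rightarrow> bool" where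
  "path_ideal_in_R2 V E src tgt Ip \<longleftrightarrow>
     Ip \<subseteq> {p. is_path V E src tgt p} \<and>
     (\<forall>p\<in>Ip. 2 \<le> plen p) \<and>
     (\<forall>p\<in>Ip. \<forall>q. is_path V E src tgt q \<and> pend tgt q = pstart p \<longrightarrow> pconcat q p \<in> Ip) \<and>
     (\<forall>p\<in>Ip. \<forall>q. is_path V E src tgt q \<and> pend tgt p = pstart q \<longrightarrow> pconcat p q \<in> Ip)"

definition complete_alg :: "'v set \<Rightarrow> 'e set \<Rightarrow> ('e \<Rightarrow> 'v) \<Rightarrow> ('e \<Rightarrow> 'v) \<Rightarrow> ('v,'e) qpath set \<Rightarrow> bool" where
  "complete_alg V E src tgt Ip \<longleftrightarrow>
     (\<forall>p p'. is_path V E src tgt p \<and> is_path V E src tgt p' \<and>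
        pstart p = pstart p' \<and> pend tgt p = pend tgt p' \<and> p \<in> Ip \<longrightarrow> p' \<in> Ip)"

definition acyclic_alg :: "'v set \<Rightarrow> 'e set \<Rightarrow> ('e \<Rightarrow> 'v) \<Rightarrow> ('e \<Rightarrow> 'v) \<Rightarrow> ('v,'e) qpath set \<Rightarrow> bool" where
  "acyclic_alg V E src tgt Ip \<longleftrightarrow>
     (\<forall>p. is_path V E src tgt p \<and> p \<notin> Ip \<and> pstart p = pend tgt p \<longrightarrow> snd p = [])"

definition Qset :: "'v set \<Rightarrow> 'e set \<Rightarrow> ('e \<Rightarrow> 'v) \<Rightarrow> ('e \<Rightarrow> 'v) \<Rightarrow> ('v,'e) qpath set \<Rightarrow> ('v,'e) qpath set" where
  "Qset V E src tgt Ip = {p. is_path V E src tgt p \<and> p \<notin> Ip}"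

(* k Gamma / I as the k-space of coefficient functions supported on \<Q> *)
definition Alg :: "'v set \<Rightarrow> 'e set \<Rightarrow> ('e \<Rightarrow> 'v) \<Rightarrow> ('e \<Rightarrow> 'v) \<Rightarrow> ('v,'e) qpath set \<Rightarrow> (('v,'e) qpath \<Rightarrow> 'k::field) set" where
  "Alg V E src tgt Ip = {a. \<forall>p. p \<notin> Qset V E src tgt Ip \<longrightarrow> a p = 0}"

definition amult :: "'v set \<Rightarrow> 'e set \<Rightarrow> ('e \<Rightarrow> 'v) \<Rightarrow> ('e \<Rightarrow> 'v) \<Rightarrow> ('v,'e) qpath set \<Rightarrow>
    (('v,'e) qpath \<Rightarrow> 'k::field) \<Rightarrow> (('v,'e) qpath \<Rightarrow> 'k) \<Rightarrow> (('v,'e) qpath \<Rightarrow> 'k)" where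
  "amult V E src tgt Ip a b = (\<lambda>p. if p \<in> Qset V E src tgt Ip
     then (\<Sum>i\<in>{0..plen p}. a (pfx i p) * b (sfx tgt i p)) else 0)"

definition ascale :: "'k::field \<Rightarrow> ('a \<Rightarrow> 'k) \<Rightarrow> ('a \<Rightarrow> 'k)" where
  "ascale c a = (\<lambda>p. c * a p)"

(* the residue class of a path *)
definition bvec :: "('v,'e) qpath \<Rightarrow> (('v,'e) qpath \<Rightarrow> 'k::field)" where
  "bvec q = (\<lambda>p. if p = q then 1 else 0)"

(* k-linear derivations of k Gamma / I (normalised to be 0 outside the algebra, so that
   they form a k-vector space of functions) *)
definition Der :: "'v set \<Rightarrow> 'e set \<Rightarrow> ('e \<Rightarrow> 'v) \<Rightarrow> ('e \<Rightarrow> 'v) \<Rightarrow> ('v,'e) qpath set \<Rightarrow> ('v,'e,'k::field) qmap set" where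
  "Der V E src tgt Ip = {D.
     (\<forall>x. x \<notin> Alg V E src tgt Ip \<longrightarrow> D x = 0) \<and>
     (\<forall>x\<in>Alg V E src tgt Ip. D x \<in> Alg V E src tgt Ip) \<and>
     (\<forall>x\<in>Alg V E src tgt Ip. \<forall>y\<in>Alg V E src tgt Ip. D (x + y) = D x + D y) \<and>
     (\<forall>c. \<forall>x\<in>Alg V E src tgt Ip. D (ascale c x) = ascale c (D x)) \<and>
     (\<forall>x\<in>Alg V E src tgt Ip. \<forall>y\<in>Alg V E src tgt Ip.
        D (amult V E src tgt Ip x y) = amult V E src tgt Ip (D x) y + amult V E src tgt Ip x (D y))}"

definition Inn :: "'v set \<Rightarrow> 'e set \<Rightarrow> ('e \<Rightarrow> 'v) \<Rightarrow> ('e \<Rightarrow> 'v) \<Rightarrow> ('v,'e) qpath set \<Rightarrow> ('v,'e,'k::field) qmap set" where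
  "Inn V E src tgt Ip = {(\<lambda>x. if x \<in> Alg V E src tgt Ip
        then amult V E src tgt Ip a x - amult V E src tgt Ip x a else 0) | a. a \<in> Alg V E src tgt Ip}"

definition dscale :: "'k::field \<Rightarrow> ('v,'e,'k) qmap \<Rightarrow> ('v,'e,'k) qmap" where
  "dscale c D = (\<lambda>x p. c * D x p)"

(* dim_k HH^1 = dim_k Der - dim_k Inn  (= dimension of the quotient Der / Inn) *)
definition hh1_dim :: "'k::field itself \<Rightarrow> 'v set \<Rightarrow> 'e set \<Rightarrow> ('e \<Rightarrow> 'v) \<Rightarrow> ('e \<Rightarrow> 'v) \<Rightarrow> ('v,'e) qpath set \<Rightarrow> int" where
  "hh1_dim K V E src tgt Ip =
     int (vector_space.dim (dscale :: 'k \<Rightarrow> _) (Der V E src tgt Ip :: ('v,'e,'k) qmap set))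
   - int (vector_space.dim (dscale :: 'k \<Rightarrow> _) (Inn V E src tgt Ip :: ('v,'e,'k) qmap set))"

definition Dbar :: "'v set \<Rightarrow> 'e set \<Rightarrow> ('e \<Rightarrow> 'v) \<Rightarrow> ('e \<Rightarrow> 'v) \<Rightarrow> ('v,'e) qpath set \<Rightarrow>
    'e \<Rightarrow> ('v,'e) qpath \<Rightarrow> ('v,'e,'k::field) qmap" where
  "Dbar V E src tgt Ip r s = (THE D. D \<in> Der V E src tgt Ip \<and>
     (\<forall>v\<in>V. D (bvec (vpath v)) = 0) \<and>
     D (bvec (apath src r)) = bvec s \<and>
     (\<forall>e\<in>E. e \<noteq> r \<longrightarrow> D (bvec (apath src e)) = 0))"

definition B2bar :: "'v set \<Rightarrow> 'e set \<Rightarrow> ('e \<Rightarrow> 'v) \<Rightarrow> ('e \<Rightarrow> 'v) \<Rightarrow> ('v,'e) qpath set \<Rightarrow> ('v,'e,'k::field) qmap set" where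
  "B2bar V E src tgt Ip = {Dbar V E src tgt Ip r s | r s.
     r \<in> E \<and> s \<in> Qset V E src tgt Ip \<and> src r = pstart s \<and> tgt r = pend tgt s}"

end

theory Submission
  imports Defs
begin

locale qa =
  fixes V :: "'v set" and E :: "'e set" and src tgt :: "'e \<Rightarrow> 'v"
    and Ip :: "('v,'e) qpath set"
  assumes fq: "finite_quiver V E src tgt"
    and pid: "path_ideal_in_R2 V E src tgt Ip"
    and cpl: "complete_alg V E src tgt Ip"
    and acy: "acyclic_alg V E src tgt Ip"
begin

abbreviation "P \<equiv> is_path V E src tgt"
abbreviation "Q \<equiv> Qset V E src tgt Ip"

fun chain :: "'v \<Rightarrow> 'e list \<Rightarrow> bool" where
  "chain v [] = (v \<in> V)"
| "chain v (e # es) = (v \<in> V \<and> e \<in> E \<and> src e = v \<and> chain (tgt e) es)"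

lemma tgtV: "e \<in> E \<Longrightarrow> tgt e \<in> V" and srcV: "e \<in> E \<Longrightarrow> src e \<in> V"
  using fq unfolding finite_quiver_def by auto

lemma finV: "finite V" and finE: "finite E"
  using fq unfolding finite_quiver_def by auto

lemma is_path_chain: "P (v, es) \<longleftrightarrow> chain v es"
proof (induction es arbitrary: v)
  case Nil
  then show ?case by (simp add: is_path_def)
next
  case (Cons e es)
  show ?case
  proof
    assume h: "P (v, e # es)"
    hence "P (tgt e, es)"
      unfolding is_path_def using tgtV
      by (auto simp: hd_conv_nth)
    with h Cons show "chain v (e # es)" by (simp add: is_path_def)
  next
    assume h: "chain v (e # es)"
    hence "P (tgt e, es)" using Cons by simp
    with h show "P (v, e # es)"
      unfolding is_path_def
      by (auto simp: hd_conv_nth nth_Cons split: nat.splits)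
  qed
qed

lemma pend_Cons: "pend tgt (v, e # es) = pend tgt (tgt e, es)"
  by (simp add: pend_def)

lemma pend_append: "pend tgt (v, as @ bs) = pend tgt (pend tgt (v, as), bs)"
  by (simp add: pend_def)

lemma chain_append: "chain v (as @ bs) \<longleftrightarrow> chain v as \<and> chain (pend tgt (v, as)) bs"
proof (induction as arbitrary: v)
  case Nil
  then show ?case by (cases bs) (auto simp: pend_def)
next
  case (Cons a as)
  then show ?case by (auto simp: pend_Cons)
qed

lemma chain_V: "chain v es \<Longrightarrow> v \<in> V"
  by (cases es) auto

lemma chain_pendV: "chain v es \<Longrightarrow> pend tgt (v, es) \<in> V"
  by (induction es arbitrary: v) (auto simp: pend_def tgtV)

lemma path_pendV: "P p \<Longrightarrow> pend tgt p \<in> V"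
  by (cases p) (simp add: is_path_chain chain_pendV)

lemma path_startV: "P p \<Longrightarrow> pstart p \<in> V"
  by (simp add: is_path_def pstart_def)

lemma Ip_path: "p \<in> Ip \<Longrightarrow> P p" and Ip_len: "p \<in> Ip \<Longrightarrow> 2 \<le> plen p"
  using pid unfolding path_ideal_in_R2_def by auto

lemma Ip_left: "p \<in> Ip \<Longrightarrow> P q \<Longrightarrow> pend tgt q = pstart p \<Longrightarrow> pconcat q p \<in> Ip"
  using pid unfolding path_ideal_in_R2_def by blast

lemma Ip_right: "p \<in> Ip \<Longrightarrow> P q \<Longrightarrow> pend tgt p = pstart q \<Longrightarrow> pconcat p q \<in> Ip"
  using pid unfolding path_ideal_in_R2_def by blast

lemma complete: "P p \<Longrightarrow> P p' \<Longrightarrow> pstart p = pstart p' \<Longrightarrow> pend tgt p = pend tgt p' \<Longrightarrow> p \<in> Ip \<Longrightarrow> p' \<in> Ip"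
  using cpl unfolding complete_alg_def by blast

lemma acyc: "P p \<Longrightarrow> p \<notin> Ip \<Longrightarrow> pstart p = pend tgt p \<Longrightarrow> snd p = []"
  using acy unfolding acyclic_alg_def by blast

lemma Q_iff: "p \<in> Q \<longleftrightarrow> P p \<and> p \<notin> Ip"
  by (simp add: Qset_def)

lemma path_concat: "P p \<Longrightarrow> P q \<Longrightarrow> pend tgt p = pstart q \<Longrightarrow> P (pconcat p q)"
  by (cases p, cases q) (auto simp: pconcat_def is_path_chain chain_append pstart_def)

lemma path_concatD: "P (pconcat p q) \<Longrightarrow> pend tgt p = pstart q \<Longrightarrow> P p \<and> P q"
  by (cases p, cases q) (auto simp: pconcat_def is_path_chain chain_append pstart_def)

lemma Q_concatD: "pconcat p q \<in> Q \<Longrightarrow> pend tgt p = pstart q \<Longrightarrow> p \<in> Q \<and> q \<in> Q"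
  unfolding Q_iff using path_concatD Ip_left Ip_right by blast

lemma pend_concat: "pend tgt p = pstart q \<Longrightarrow> pend tgt (pconcat p q) = pend tgt q"
  by (cases p, cases q) (auto simp: pconcat_def pend_def pstart_def)

lemma pstart_concat: "pstart (pconcat p q) = pstart p"
  by (simp add: pconcat_def pstart_def)

lemma pconcat_assoc: "pconcat (pconcat p q) r = pconcat p (pconcat q r)"
  by (simp add: pconcat_def)

lemma Q_len_bound:
  assumes "p \<in> Q" shows "plen p < card V"
proof (rule ccontr)
  assume "\<not> plen p < card V"
  obtain v es where p: "p = (v, es)" by force
  have ch: "chain v es" and nI: "(v, es) \<notin> Ip" using assms p by (auto simp: Q_iff is_path_chain)
  let ?f = "\<lambda>i. pend tgt (v, take i es)"
  have "?f ` {0..length es} \<subseteq> V"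
  proof
    fix x assume "x \<in> ?f ` {0..length es}"
    then obtain i where "x = ?f i" by auto
    moreover have "chain v (take i es)" using ch chain_append[of v "take i es" "drop i es"] by simp
    ultimately show "x \<in> V" using chain_pendV by simp
  qed
  hence "card (?f ` {0..length es}) \<le> card V" by (simp add: card_mono finV)
  also have "card V < card {0..length es}" using \<open>\<not> plen p < card V\<close> p by (simp add: plen_def)
  finally have "\<not> inj_on ?f {0..length es}" using card_image by fastforce
  then obtain i j where ij: "i \<le> length es" "j \<le> length es" "i < j" "?f i = ?f j"
    unfolding inj_on_def by (metis atLeastAtMost_iff linorder_neqE_nat)
  define as where "as = take i es"
  define bs where "bs = drop i (take j es)"
  define cs where "cs = drop j es"
  have es: "es = as @ bs @ cs" unfolding as_def bs_def cs_def
    using ij by (metis append.assoc append_take_drop_id less_imp_le_nat take_take min.absorb1)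
  have tj: "take j es = as @ bs" unfolding as_def bs_def using ij
    by (metis append_take_drop_id less_imp_le_nat min.absorb1 take_take)
  have bne: "bs \<noteq> []" unfolding bs_def using ij by simp
  let ?w = "pend tgt (v, as)"
  have chs: "chain v as" "chain ?w bs" "chain (pend tgt (?w, bs)) cs"
    using ch unfolding es by (auto simp: chain_append pend_append[symmetric])
  have cyc: "pend tgt (?w, bs) = ?w"
    using ij(4) tj unfolding as_def by (simp add: pend_append)
  have "(?w, bs) \<in> Ip"
    using acyc[of "(?w, bs)"] chs cyc bne by (auto simp: is_path_chain pstart_def)
  hence "pconcat (v, as) (?w, bs) \<in> Ip"
    by (rule Ip_left) (use chs in \<open>auto simp: is_path_chain pstart_def\<close>)
  hence "pconcat (pconcat (v, as) (?w, bs)) (pend tgt (?w, bs), cs) \<in> Ip"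
    by (rule Ip_right) (use chs cyc in \<open>auto simp: is_path_chain pstart_def pend_append pconcat_def\<close>)
  hence "(v, es) \<in> Ip" by (simp add: pconcat_def es)
  with nI show False by simp
qed

lemma finite_Q: "finite Q"
proof -
  have "Q \<subseteq> V \<times> {es. set es \<subseteq> E \<and> length es \<le> card V}"
    using Q_len_bound by (force simp: Q_iff is_path_def plen_def)
  moreover have "finite (V \<times> {es. set es \<subseteq> E \<and> length es \<le> card V})"
    using finV finE finite_lists_length_le by blast
  ultimately show ?thesis by (rule finite_subset)
qed


lemma pfx_sfx_iff:
  assumes "i \<le> plen x"
  shows "(pfx i x = p \<and> sfx tgt i x = q) \<longleftrightarrow> (i = plen p \<and> x = pconcat p q \<and> pend tgt p = pstart q)"
proof -
  obtain v xs where x: "x = (v, xs)" by force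
  obtain u ps where p: "p = (u, ps)" by force
  obtain w qs where q: "q = (w, qs)" by force
  have i: "i \<le> length xs" using assms x by (simp add: plen_def)
  show ?thesis
  proof
    assume h: "pfx i x = p \<and> sfx tgt i x = q"
    hence hp: "u = v" "ps = take i xs" and hq: "qs = drop i xs"
      "w = (if i = 0 then v else tgt (xs ! (i - 1)))"
      using x p q by (auto simp: pfx_def sfx_def)
    have "pend tgt p = w"
      using hp hq i by (auto simp: pend_def p last_conv_nth nth_take)
    then show "i = plen p \<and> x = pconcat p q \<and> pend tgt p = pstart q"
      using hp hq i x p q by (simp add: plen_def pconcat_def pstart_def min_def)
  next
    assume h: "i = plen p \<and> x = pconcat p q \<and> pend tgt p = pstart q"
    hence hh: "i = length ps" "v = u" "xs = ps @ qs" "pend tgt (u, ps) = w"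
      using x p q by (auto simp: plen_def pconcat_def pstart_def)
    have s1: "pfx i x = p" using hh x p by (simp add: pfx_def)
    have s2: "sfx tgt i x = q"
    proof (cases "ps = []")
      case True then show ?thesis using hh x q by (simp add: pend_def sfx_def)
    next
      case False
      hence "xs ! (i - 1) = last ps" using hh by (simp add: nth_append last_conv_nth)
      then show ?thesis using hh False x q by (simp add: pend_def sfx_def)
    qed
    show "pfx i x = p \<and> sfx tgt i x = q" using s1 s2 by simp
  qed
qed

end

lemma sum_fun_apply: "(sum f A) x = sum (\<lambda>a. f a x) A"
  by (induction A rule: infinite_finite_induct) auto

lemma ascale_apply: "ascale c a p = c * a p"
  by (simp add: ascale_def)

lemma bvec_apply: "bvec q p = (if p = q then 1 else 0)"
  by (simp add: bvec_def)

context qa begin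

abbreviation "mul \<equiv> amult V E src tgt Ip"
abbreviation "Al \<equiv> Alg V E src tgt Ip"

lemma Alg_iff: "a \<in> Al \<longleftrightarrow> (\<forall>p. p \<notin> Q \<longrightarrow> a p = 0)"
  by (simp add: Alg_def)

lemma AlgD: "a \<in> Al \<Longrightarrow> p \<notin> Q \<Longrightarrow> a p = 0"
  unfolding Alg_def by blast

lemma amult_Alg[simp]: "mul a b \<in> Al"
  by (simp add: Alg_def amult_def)

lemma zero_Alg[simp]: "0 \<in> Al" and add_Alg[simp]: "a \<in> Al \<Longrightarrow> b \<in> Al \<Longrightarrow> a + b \<in> Al"
  and diff_Alg[simp]: "a \<in> Al \<Longrightarrow> b \<in> Al \<Longrightarrow> a - b \<in> Al"
  and scale_Alg[simp]: "a \<in> Al \<Longrightarrow> ascale c a \<in> Al"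
  and uminus_Alg[simp]: "a \<in> Al \<Longrightarrow> - a \<in> Al"
  by (auto simp: Alg_def ascale_def)

lemma sum_Alg: "(\<And>i. i \<in> I \<Longrightarrow> f i \<in> Al) \<Longrightarrow> sum f I \<in> Al"
  by (induction I rule: infinite_finite_induct) auto

lemma bvec_Alg[simp]: "q \<in> Q \<Longrightarrow> bvec q \<in> Al"
  by (simp add: Alg_def bvec_def)

lemma amult_add_left: "mul (a + b) c = mul a c + mul b c"
  and amult_add_right: "mul c (a + b) = mul c a + mul c b"
  and amult_diff_left: "mul (a - b) c = mul a c - mul b c"
  and amult_diff_right: "mul c (a - b) = mul c a - mul c b"
  and amult_scale_left: "mul (ascale k a) c = ascale k (mul a c)"
  and amult_scale_right: "mul c (ascale k a) = ascale k (mul c a)"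
  and amult_zero_left: "mul 0 c = 0"
  and amult_zero_right: "mul c 0 = 0"
  by (auto simp: amult_def fun_eq_iff algebra_simps sum.distrib sum_subtractf sum_distrib_left ascale_apply)

lemma amult_sum_left: "mul (sum f I) c = (\<Sum>i\<in>I. mul (f i) c)"
proof (induction I rule: infinite_finite_induct)
  case (insert x F) thus ?case by (simp only: sum.insert[OF insert.hyps] amult_add_left insert.IH)
next
  case (infinite A) thus ?case by (metis sum.infinite amult_zero_left)
qed (simp only: sum.empty amult_zero_left)

lemma amult_sum_right: "mul c (sum f I) = (\<Sum>i\<in>I. mul c (f i))"
proof (induction I rule: infinite_finite_induct)
  case (insert x F) thus ?case by (simp only: sum.insert[OF insert.hyps] amult_add_right insert.IH)
next
  case (infinite A) thus ?case by (metis sum.infinite amult_zero_right)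
qed (simp only: sum.empty amult_zero_right)

lemma alg_expand: "a \<in> Al \<Longrightarrow> a = (\<Sum>p\<in>Q. ascale (a p) (bvec p))"
proof (rule ext)
  fix t assume a: "a \<in> Al"
  have "(\<Sum>p\<in>Q. ascale (a p) (bvec p)) t = (\<Sum>p\<in>Q. if p = t then a p else 0)"
    by (auto simp: sum_fun_apply bvec_apply ascale_apply intro!: sum.cong)
  also have "\<dots> = a t" using a by (simp add: sum.delta' finite_Q AlgD)
  finally show "a t = (\<Sum>p\<in>Q. ascale (a p) (bvec p)) t" by simp
qed

lemma mult_basis_apply:
  "mul (bvec p) (bvec q) t = (if pend tgt p = pstart q \<and> pconcat p q \<in> Q then bvec (pconcat p q) t else 0)"
proof (cases "t \<in> Q")
  case False
  then show ?thesis by (auto simp: amult_def bvec_apply)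
next
  case True
  have "mul (bvec p) (bvec q) t =
     (\<Sum>i\<in>{0..plen t}. if i = plen p then (if t = pconcat p q \<and> pend tgt p = pstart q then 1 else 0) else 0)"
  proof -
    have "mul (bvec p) (bvec q) t = (\<Sum>i\<in>{0..plen t}. bvec p (pfx i t) * bvec q (sfx tgt i t))"
      using True by (simp add: amult_def)
    also have "\<dots> = (\<Sum>i\<in>{0..plen t}. if i = plen p then (if t = pconcat p q \<and> pend tgt p = pstart q then 1 else 0) else 0)"
    proof (rule sum.cong[OF refl])
      fix i assume "i \<in> {0..plen t}"
      hence i: "i \<le> plen t" by simp
      have "bvec p (pfx i t) * bvec q (sfx tgt i t) = (if pfx i t = p \<and> sfx tgt i t = q then 1 else 0)"
        by (simp add: bvec_apply)
      also have "\<dots> = (if i = plen p \<and> t = pconcat p q \<and> pend tgt p = pstart q then 1 else 0)"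
        by (simp only: pfx_sfx_iff[OF i])
      also have "\<dots> = (if i = plen p then (if t = pconcat p q \<and> pend tgt p = pstart q then 1 else 0) else 0)"
        by simp
      finally show "bvec p (pfx i t) * bvec q (sfx tgt i t) = (if i = plen p then (if t = pconcat p q \<and> pend tgt p = pstart q then 1 else 0) else 0)" .
    qed
    finally show ?thesis .
  qed
  also have "\<dots> = (if plen p \<le> plen t \<and> t = pconcat p q \<and> pend tgt p = pstart q then 1 else 0)"
    by (subst sum.delta) auto
  also have "\<dots> = (if t = pconcat p q \<and> pend tgt p = pstart q then 1 else 0)"
    by (auto simp: plen_def pconcat_def)
  finally show ?thesis using True by (auto simp: bvec_apply)
qed

lemma mult_basis:
  "mul (bvec p) (bvec q) = (if pend tgt p = pstart q \<and> pconcat p q \<in> Q then bvec (pconcat p q) else 0)"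
  by (rule ext) (simp add: mult_basis_apply)

end

lemma dscale_apply: "dscale c D x = ascale c (D x)"
  by (simp add: dscale_def ascale_def)

interpretation DS: vector_space "dscale :: 'k::field \<Rightarrow> ('a,'b,'k) qmap \<Rightarrow> ('a,'b,'k) qmap"
  by unfold_locales (auto simp: dscale_def fun_eq_iff algebra_simps)

context qa begin

lemma Q_concat3: "pconcat p (pconcat q r) \<in> Q \<Longrightarrow> pend tgt p = pstart q \<Longrightarrow> pend tgt q = pstart r
   \<Longrightarrow> pconcat p q \<in> Q \<and> pconcat q r \<in> Q"
  by (metis Q_concatD pconcat_assoc pend_concat pstart_concat)

lemma assoc_basis: "mul (mul (bvec p) (bvec q)) (bvec r :: _ \<Rightarrow> 'k::field) = mul (bvec p) (mul (bvec q) (bvec r))"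
proof -
  let ?X = "if pend tgt p = pstart q \<and> pend tgt q = pstart r \<and> pconcat p (pconcat q r) \<in> Q
            then bvec (pconcat p (pconcat q r)) else (0 :: _ \<Rightarrow> 'k::field)"
  have L: "mul (mul (bvec p) (bvec q)) (bvec r) = ?X"
    by (auto simp: mult_basis amult_zero_left pend_concat pconcat_assoc dest: Q_concatD Q_concat3)
  have R: "mul (bvec p) (mul (bvec q) (bvec r)) = ?X"
    by (auto simp: mult_basis amult_zero_right pstart_concat pconcat_assoc dest: Q_concatD Q_concat3)
  show ?thesis using L R by simp
qed

lemma assoc1: "mul (mul (bvec p) (bvec q)) (\<Sum>r\<in>R. ascale (c r) (bvec r)) = mul (bvec p) (mul (bvec q) (\<Sum>r\<in>R. ascale (c r) (bvec r)))"
  by (simp add: amult_sum_right amult_scale_right assoc_basis)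

lemma assoc1': "z \<in> Al \<Longrightarrow> mul (mul (bvec p) (bvec q)) z = mul (bvec p) (mul (bvec q) z)"
  using assoc1[of p q "\<lambda>r. z r" Q] by (simp only: alg_expand[symmetric])

lemma assoc2: "z \<in> Al \<Longrightarrow> mul (mul (bvec p) (\<Sum>r\<in>R. ascale (c r) (bvec r))) z = mul (bvec p) (mul (\<Sum>r\<in>R. ascale (c r) (bvec r)) z)"
  by (simp add: amult_sum_right amult_sum_left amult_scale_right amult_scale_left assoc1')

lemma assoc2': "y \<in> Al \<Longrightarrow> z \<in> Al \<Longrightarrow> mul (mul (bvec p) y) z = mul (bvec p) (mul y z)"
  using assoc2[of z p "\<lambda>r. y r" Q] by (simp only: alg_expand[symmetric])

lemma assoc3: "y \<in> Al \<Longrightarrow> z \<in> Al \<Longrightarrow> mul (mul (\<Sum>r\<in>R. ascale (c r) (bvec r)) y) z = mul (\<Sum>r\<in>R. ascale (c r) (bvec r)) (mul y z)"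
  by (simp add: amult_sum_right amult_sum_left amult_scale_right amult_scale_left assoc2')

lemma assoc: "x \<in> Al \<Longrightarrow> y \<in> Al \<Longrightarrow> z \<in> Al \<Longrightarrow> mul (mul x y) z = mul x (mul y z)"
  using assoc3[of y z "\<lambda>r. x r" Q] by (simp only: alg_expand[symmetric])

definition vsupp :: "(('v,'e) qpath \<Rightarrow> 'k::field) \<Rightarrow> bool" where
  "vsupp a \<longleftrightarrow> (\<forall>p. snd p \<noteq> [] \<longrightarrow> a p = 0)"

lemma sum_first:
  assumes "\<And>i. i \<in> {1..n} \<Longrightarrow> f i = (0::'k::field)" shows "(\<Sum>i\<in>{0..n::nat}. f i) = f 0"
proof -
  have "(\<Sum>i\<in>{0..n}. f i) = f 0 + (\<Sum>i\<in>{0..n} - {0}. f i)" by (subst sum.remove[of _ 0]) auto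
  also have "(\<Sum>i\<in>{0..n} - {0}. f i) = 0" by (rule sum.neutral) (use assms in auto)
  finally show ?thesis by simp
qed

lemma sum_last:
  assumes "\<And>i. i < n \<Longrightarrow> f i = (0::'k::field)" shows "(\<Sum>i\<in>{0..n::nat}. f i) = f n"
proof -
  have "(\<Sum>i\<in>{0..n}. f i) = f n + (\<Sum>i\<in>{0..n} - {n}. f i)" by (subst sum.remove[of _ n]) auto
  also have "(\<Sum>i\<in>{0..n} - {n}. f i) = 0" by (rule sum.neutral) (use assms in auto)
  finally show ?thesis by simp
qed

lemma sfx_last: "sfx tgt (plen t) t = vpath (pend tgt t)"
  by (cases t) (auto simp: sfx_def plen_def vpath_def pend_def last_conv_nth)

lemma vsupp_left:
  assumes "vsupp a" shows "mul a y t = (if t \<in> Q then a (vpath (pstart t)) * y t else 0)"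
proof (cases "t \<in> Q")
  case True
  have "mul a y t = (\<Sum>i\<in>{0..plen t}. a (pfx i t) * y (sfx tgt i t))"
    using True by (simp add: amult_def)
  also have "\<dots> = a (pfx 0 t) * y (sfx tgt 0 t)"
  proof (rule sum_first)
    fix i assume "i \<in> {1..plen t}"
    hence "take i (snd t) \<noteq> []" by (auto simp: plen_def)
    thus "a (pfx i t) * y (sfx tgt i t) = 0" using assms by (simp add: vsupp_def pfx_def)
  qed
  also have "\<dots> = a (vpath (pstart t)) * y t"
    by (simp add: pfx_def sfx_def vpath_def pstart_def)
  finally show ?thesis using True by simp
qed (simp add: amult_def)

lemma pfx_all: "pfx (plen t) t = t"
  by (simp add: pfx_def plen_def)

lemma ascale_diff: "ascale c (a - b) = ascale c a - ascale c b"
  and ascale_add: "ascale c (a + b) = ascale c a + ascale c b"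
  and ascale_zero[simp]: "ascale c 0 = 0"
  by (auto simp: fun_eq_iff algebra_simps ascale_apply)

lemma vsupp_right:
  assumes "vsupp a" shows "mul y a t = (if t \<in> Q then y t * a (vpath (pend tgt t)) else 0)"
proof (cases "t \<in> Q")
  case True
  have "mul y a t = (\<Sum>i\<in>{0..plen t}. y (pfx i t) * a (sfx tgt i t))"
    using True by (simp add: amult_def)
  also have "\<dots> = y (pfx (plen t) t) * a (sfx tgt (plen t) t)"
    by (rule sum_last) (use assms in \<open>auto simp: vsupp_def sfx_def plen_def\<close>)
  also have "\<dots> = y t * a (vpath (pend tgt t))"
    by (simp add: pfx_all sfx_last)
  finally show ?thesis using True by simp
qed (simp add: amult_def)

definition ev :: "'v \<Rightarrow> ('v,'e) qpath \<Rightarrow> 'k::field" where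
  "ev v = bvec (vpath v)"

definition one :: "('v,'e) qpath \<Rightarrow> 'k::field" where
  "one = (\<Sum>v\<in>V. ev v)"

lemma vpath_Q: "vpath v \<in> Q \<longleftrightarrow> v \<in> V"
  using Ip_len by (force simp: Q_iff vpath_def is_path_def plen_def)

lemma ev_Alg[simp]: "v \<in> V \<Longrightarrow> ev v \<in> Al"
  by (simp add: ev_def vpath_Q)

lemma vsupp_ev: "vsupp (ev v)"
  by (simp add: vsupp_def ev_def bvec_apply vpath_def)

lemma ev_vpath: "ev v (vpath w) = (if v = w then 1 else 0)"
  by (auto simp: ev_def bvec_apply vpath_def)

lemma one_apply: "one p = (if snd p = [] \<and> fst p \<in> V then 1 else 0)"
proof -
  have "one p = (\<Sum>v\<in>V. if v = fst p then (if snd p = [] then 1 else 0) else 0)"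
    by (cases p) (auto simp: one_def sum_fun_apply ev_def bvec_apply vpath_def intro!: sum.cong)
  also have "\<dots> = (if snd p = [] \<and> fst p \<in> V then 1 else 0)"
    by (subst sum.delta) (auto simp: finV)
  finally show ?thesis .
qed

lemma vsupp_one: "vsupp one"
  by (simp add: vsupp_def one_apply)

lemma Q_startV: "t \<in> Q \<Longrightarrow> pstart t \<in> V" and Q_endV: "t \<in> Q \<Longrightarrow> pend tgt t \<in> V"
  by (auto simp: Q_iff path_startV path_pendV)

lemma one_left: "x \<in> Al \<Longrightarrow> mul one x = x"
  by (rule ext) (auto simp: vsupp_left[OF vsupp_one] one_apply vpath_def Q_startV AlgD)

lemma one_right: "x \<in> Al \<Longrightarrow> mul x one = x"
  by (rule ext) (auto simp: vsupp_right[OF vsupp_one] one_apply vpath_def Q_endV AlgD)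

lemma one_Alg: "one \<in> Al"
  unfolding one_def by (rule sum_Alg) simp

definition ad :: "(('v,'e) qpath \<Rightarrow> 'k::field) \<Rightarrow> ('v,'e,'k) qmap" where
  "ad a = (\<lambda>x. if x \<in> Al then mul a x - mul x a else 0)"

lemma Inn_eq: "Inn V E src tgt Ip = ad ` Al"
  by (auto simp: Inn_def ad_def)

lemma ad_add: "ad (a + b) = ad a + ad b"
  by (rule ext) (simp add: ad_def amult_add_left amult_add_right)

lemma ad_scale: "ad (ascale c a) = dscale c (ad a)"
  by (rule ext) (auto simp: ad_def dscale_apply amult_scale_left amult_scale_right ascale_diff ascale_zero)

lemma ad_zero: "ad 0 = 0"
  by (rule ext) (simp add: ad_def amult_zero_left amult_zero_right)

lemma ad_sum: "ad (sum f I) = (\<Sum>i\<in>I. ad (f i))"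
proof (induction I rule: infinite_finite_induct)
  case (insert x F) thus ?case by (simp only: sum.insert[OF insert.hyps] ad_add insert.IH)
next
  case (infinite A) thus ?case by (metis sum.infinite ad_zero)
qed (simp only: sum.empty ad_zero)

lemma ad_one: "ad one = 0"
  by (rule ext) (simp add: ad_def one_left one_right)

abbreviation "Dr \<equiv> Der V E src tgt Ip"

lemma DerI:
  assumes "\<And>x. x \<notin> Al \<Longrightarrow> D x = 0" "\<And>x. x \<in> Al \<Longrightarrow> D x \<in> Al"
    "\<And>x y. x \<in> Al \<Longrightarrow> y \<in> Al \<Longrightarrow> D (x + y) = D x + D y"
    "\<And>c x. x \<in> Al \<Longrightarrow> D (ascale c x) = ascale c (D x)"
    "\<And>x y. x \<in> Al \<Longrightarrow> y \<in> Al \<Longrightarrow> D (mul x y) = mul (D x) y + mul x (D y)"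
  shows "D \<in> Dr"
  using assms unfolding Der_def by blast

lemma DerD:
  assumes "D \<in> Dr"
  shows "\<And>x. x \<notin> Al \<Longrightarrow> D x = 0" "\<And>x. x \<in> Al \<Longrightarrow> D x \<in> Al"
    "\<And>x y. x \<in> Al \<Longrightarrow> y \<in> Al \<Longrightarrow> D (x + y) = D x + D y"
    "\<And>c x. x \<in> Al \<Longrightarrow> D (ascale c x) = ascale c (D x)"
    "\<And>x y. x \<in> Al \<Longrightarrow> y \<in> Al \<Longrightarrow> D (mul x y) = mul (D x) y + mul x (D y)"
  using assms unfolding Der_def by blast+

lemma ad_Der: "(a :: ('v,'e) qpath \<Rightarrow> 'k::field) \<in> Al \<Longrightarrow> ad a \<in> Dr"
proof (rule DerI)
  fix x y :: "('v,'e) qpath \<Rightarrow> 'k" assume a: "a \<in> Al" and x: "x \<in> Al" and y: "y \<in> Al"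
  show "ad a (mul x y) = mul (ad a x) y + mul x (ad a y)"
    using a x y by (simp add: ad_def amult_diff_left amult_diff_right assoc)
next
  fix x y :: "('v,'e) qpath \<Rightarrow> 'k" assume "x \<in> Al" "y \<in> Al"
  then show "ad a (x + y) = ad a x + ad a y"
    by (simp add: ad_def amult_add_left amult_add_right)
next
  fix c and x :: "('v,'e) qpath \<Rightarrow> 'k" assume "x \<in> Al"
  then show "ad a (ascale c x) = ascale c (ad a x)"
    by (simp add: ad_def amult_scale_left amult_scale_right ascale_diff)
qed (auto simp: ad_def)

lemma Der_subspace: "DS.subspace (Dr :: ('v,'e,'k::field) qmap set)"
proof (rule DS.subspaceI)
  show "0 \<in> Dr" by (rule DerI) (auto simp: amult_zero_left amult_zero_right)
next
  fix D1 D2 :: "('v,'e,'k) qmap" assume d1: "D1 \<in> Dr" and d2: "D2 \<in> Dr"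
  show "D1 + D2 \<in> Dr"
  proof (rule DerI)
    fix x y :: "('v,'e) qpath \<Rightarrow> 'k" assume "x \<in> Al" "y \<in> Al"
    then show "(D1 + D2) (mul x y) = mul ((D1 + D2) x) y + mul x ((D1 + D2) y)"
      using DerD(5)[OF d1] DerD(5)[OF d2] by (simp add: amult_add_left amult_add_right)
  qed (use DerD[OF d1] DerD[OF d2] in \<open>auto simp: fun_eq_iff algebra_simps ascale_apply\<close>)
next
  fix c and D :: "('v,'e,'k) qmap" assume d: "D \<in> Dr"
  show "dscale c D \<in> Dr"
  proof (rule DerI)
    fix x y :: "('v,'e) qpath \<Rightarrow> 'k" assume "x \<in> Al" "y \<in> Al"
    then show "dscale c D (mul x y) = mul (dscale c D x) y + mul x (dscale c D y)"
      using DerD(5)[OF d] by (simp add: dscale_apply amult_scale_left amult_scale_right ascale_add)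
  qed (use DerD[OF d] in \<open>auto simp: dscale_apply fun_eq_iff algebra_simps ascale_apply\<close>)
qed

lemma Der_span: "DS.span (Dr :: ('v,'e,'k::field) qmap set) = Dr"
  using Der_subspace by simp


definition linA :: "('v,'e,'k::field) qmap \<Rightarrow> bool" where
  "linA L \<longleftrightarrow> (\<forall>x\<in>Al. \<forall>y\<in>Al. L (x + y) = L x + L y) \<and> (\<forall>c. \<forall>x\<in>Al. L (ascale c x) = ascale c (L x))"

lemma Der_linA: "D \<in> Dr \<Longrightarrow> linA D"
  unfolding linA_def using DerD by blast

lemma linA_zero: "linA L \<Longrightarrow> L 0 = 0"
  unfolding linA_def by (metis ascale_zero mult_zero_left zero_Alg fun_eq_iff ascale_apply zero_fun_apply)

lemma linA_sum:
  assumes L: "linA L" and f: "\<And>i. i \<in> I \<Longrightarrow> f i \<in> Al"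
  shows "L (\<Sum>i\<in>I. ascale (c i) (f i)) = (\<Sum>i\<in>I. ascale (c i) (L (f i)))"
  using f
proof (induction I rule: infinite_finite_induct)
  case (infinite A) thus ?case using linA_zero[OF L] by (metis sum.infinite)
next
  case empty thus ?case using linA_zero[OF L] by (simp only: sum.empty)
next
  case (insert x F)
  have m1: "ascale (c x) (f x) \<in> Al" using insert.prems by simp
  have m2: "(\<Sum>i\<in>F. ascale (c i) (f i)) \<in> Al" by (rule sum_Alg) (use insert.prems in simp)
  have "L (\<Sum>i\<in>insert x F. ascale (c i) (f i)) = L (ascale (c x) (f x) + (\<Sum>i\<in>F. ascale (c i) (f i)))"
    by (simp only: sum.insert[OF insert.hyps])
  also have "\<dots> = L (ascale (c x) (f x)) + L (\<Sum>i\<in>F. ascale (c i) (f i))"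
    using L m1 m2 unfolding linA_def by blast
  also have "\<dots> = ascale (c x) (L (f x)) + (\<Sum>i\<in>F. ascale (c i) (L (f i)))"
    using L insert unfolding linA_def by auto
  finally show ?case by (simp only: sum.insert[OF insert.hyps])
qed

lemma sum_lessThan_add: "(\<Sum>i<m + (n::nat). f i) = (\<Sum>i<m. f i) + (\<Sum>j<n. f (m + j))"
  by (induction n) (simp_all add: add_ac)

lemma leib_basis:
  assumes L: "linA L"
    and B: "\<And>p q. p \<in> Q \<Longrightarrow> q \<in> Q \<Longrightarrow> L (mul (bvec p) (bvec q)) = mul (L (bvec p)) (bvec q) + mul (bvec p) (L (bvec q))"
    and x: "x \<in> Al" and y: "y \<in> Al"
  shows "L (mul x y) = mul (L x) y + mul x (L y)"
proof -
  have step1: "L (mul (bvec p) (\<Sum>q\<in>R. ascale (c q) (bvec q))) = mul (L (bvec p)) (\<Sum>q\<in>R. ascale (c q) (bvec q)) + mul (bvec p) (L (\<Sum>q\<in>R. ascale (c q) (bvec q)))"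
    if "p \<in> Q" "R \<subseteq> Q" for p R c
  proof -
    have "L (mul (bvec p) (\<Sum>q\<in>R. ascale (c q) (bvec q))) = L (\<Sum>q\<in>R. ascale (c q) (mul (bvec p) (bvec q)))"
      by (simp add: amult_sum_right amult_scale_right)
    also have "\<dots> = (\<Sum>q\<in>R. ascale (c q) (L (mul (bvec p) (bvec q))))"
      by (rule linA_sum[OF L]) simp
    also have "\<dots> = (\<Sum>q\<in>R. ascale (c q) (mul (L (bvec p)) (bvec q)) + ascale (c q) (mul (bvec p) (L (bvec q))))"
    proof (rule sum.cong[OF refl])
      fix q assume "q \<in> R" hence "q \<in> Q" using that by auto
      then show "ascale (c q) (L (mul (bvec p) (bvec q))) = ascale (c q) (mul (L (bvec p)) (bvec q)) + ascale (c q) (mul (bvec p) (L (bvec q)))"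
        using B[OF \<open>p \<in> Q\<close>] by (simp add: ascale_add)
    qed
    also have "\<dots> = mul (L (bvec p)) (\<Sum>q\<in>R. ascale (c q) (bvec q)) + mul (bvec p) (\<Sum>q\<in>R. ascale (c q) (L (bvec q)))"
      by (simp add: sum.distrib amult_sum_right amult_scale_right)
    also have "(\<Sum>q\<in>R. ascale (c q) (L (bvec q))) = L (\<Sum>q\<in>R. ascale (c q) (bvec q))"
      using that by (intro linA_sum[OF L, symmetric]) auto
    finally show ?thesis .
  qed
  have s1: "L (mul (bvec p) y) = mul (L (bvec p)) y + mul (bvec p) (L y)" if "p \<in> Q" for p
    using step1[OF that order_refl, of "\<lambda>q. y q"] by (simp only: alg_expand[OF y, symmetric])
  have step2: "L (mul (\<Sum>p\<in>R. ascale (c p) (bvec p)) y) = mul (L (\<Sum>p\<in>R. ascale (c p) (bvec p))) y + mul (\<Sum>p\<in>R. ascale (c p) (bvec p)) (L y)"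
    if "R \<subseteq> Q" for R c
  proof -
    have "L (mul (\<Sum>p\<in>R. ascale (c p) (bvec p)) y) = L (\<Sum>p\<in>R. ascale (c p) (mul (bvec p) y))"
      by (simp add: amult_sum_left amult_scale_left)
    also have "\<dots> = (\<Sum>p\<in>R. ascale (c p) (L (mul (bvec p) y)))"
      by (rule linA_sum[OF L]) simp
    also have "\<dots> = (\<Sum>p\<in>R. ascale (c p) (mul (L (bvec p)) y) + ascale (c p) (mul (bvec p) (L y)))"
    proof (rule sum.cong[OF refl])
      fix p assume "p \<in> R" hence "p \<in> Q" using that by auto
      then show "ascale (c p) (L (mul (bvec p) y)) = ascale (c p) (mul (L (bvec p)) y) + ascale (c p) (mul (bvec p) (L y))"
        using s1 by (simp add: ascale_add)
    qed
    also have "\<dots> = mul (\<Sum>p\<in>R. ascale (c p) (L (bvec p))) y + mul (\<Sum>p\<in>R. ascale (c p) (bvec p)) (L y)"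
      by (simp add: sum.distrib amult_sum_left amult_scale_left)
    also have "(\<Sum>p\<in>R. ascale (c p) (L (bvec p))) = L (\<Sum>p\<in>R. ascale (c p) (bvec p))"
      using that by (intro linA_sum[OF L, symmetric]) auto
    finally show ?thesis .
  qed
  show ?thesis
    using step2[OF order_refl, of "\<lambda>p. x p"] by (simp only: alg_expand[OF x, symmetric])
qed

lemma linA_expand: "linA L \<Longrightarrow> x \<in> Al \<Longrightarrow> L x = (\<Sum>p\<in>Q. ascale (x p) (L (bvec p)))"
  by (subst alg_expand, assumption, rule linA_sum) auto

definition apth :: "'e \<Rightarrow> ('v,'e) qpath \<Rightarrow> 'k::field" where
  "apth e = bvec (apath src e)"

lemma apath_Q: "e \<in> E \<Longrightarrow> apath src e \<in> Q"
  using Ip_len by (force simp: Q_iff apath_def is_path_chain tgtV srcV plen_def)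

lemma generators:
  assumes D: "D \<in> Dr" and hv: "\<And>v. v \<in> V \<Longrightarrow> D (ev v) = 0"
    and he: "\<And>e. e \<in> E \<Longrightarrow> D (apth e) = 0"
  shows "D = 0"
proof -
  have b: "q \<in> Q \<Longrightarrow> plen q = n \<Longrightarrow> D (bvec q) = 0" for n q
  proof (induction n arbitrary: q)
    case 0
    then obtain v where q: "q = vpath v" by (cases q) (auto simp: plen_def vpath_def)
    then show ?case using 0 hv by (simp add: ev_def vpath_Q)
  next
    case (Suc n)
    obtain v es where q: "q = (v, es)" by force
    have "es \<noteq> []" using Suc.prems q by (auto simp: plen_def)
    then obtain es' a where es: "es = es' @ [a]" by (metis rev_exhaust)
    have ch: "chain v (es' @ [a])" using Suc.prems q es by (simp add: Q_iff is_path_chain)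
    hence a: "a \<in> E" "src a = pend tgt (v, es')" by (auto simp: chain_append)
    have qq: "q = pconcat (v, es') (apath src a)" by (simp add: q es pconcat_def apath_def)
    have pe: "pend tgt (v, es') = pstart (apath src a)" using a by (simp add: apath_def pstart_def)
    have q': "(v, es') \<in> Q" using Q_concatD[of "(v, es')" "apath src a"] Suc.prems qq pe by simp
    have "bvec q = mul (bvec (v, es')) (apth a)"
      unfolding apth_def using pe Suc.prems qq by (simp add: mult_basis)
    moreover have "plen (v, es') = n" using Suc.prems q es by (simp add: plen_def)
    hence "D (bvec (v, es')) = 0" by (rule Suc.IH[OF q'])
    moreover have "D (apth a) = 0" using he a by simp
    moreover have "D (mul (bvec (v, es')) (apth a)) = mul (D (bvec (v, es'))) (apth a) + mul (bvec (v, es')) (D (apth a))"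
      using DerD(5)[OF D, of "bvec (v, es')" "apth a"] q' a apath_Q[of a] by (simp add: apth_def)
    ultimately show ?case by (metis amult_zero_left amult_zero_right add_0)
  qed
  show ?thesis
  proof (rule ext)
    fix x show "D x = 0 x"
    proof (cases "x \<in> Al")
      case True
      then show ?thesis using linA_expand[OF Der_linA[OF D] True] b by simp
    qed (use DerD(1)[OF D] in simp)
  qed
qed

end

context qa begin

definition rep :: "('v,'e) qpath \<Rightarrow> nat \<Rightarrow> ('v,'e) qpath \<Rightarrow> ('v,'e) qpath" where
  "rep s i p = (fst p, take i (snd p) @ snd s @ drop (Suc i) (snd p))"

definition delta :: "'e \<Rightarrow> ('v,'e) qpath \<Rightarrow> ('v,'e) qpath \<Rightarrow> (('v,'e) qpath \<Rightarrow> 'k::field)" where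
  "delta r s p = (\<Sum>i<plen p. if snd p ! i = r then bvec (rep s i p) else 0)"

definition Drs :: "'e \<Rightarrow> ('v,'e) qpath \<Rightarrow> ('v,'e,'k::field) qmap" where
  "Drs r s x = (if x \<in> Al then \<Sum>p\<in>Q. ascale (x p) (delta r s p) else 0)"

definition valid :: "'e \<Rightarrow> ('v,'e) qpath \<Rightarrow> bool" where
  "valid r s \<longleftrightarrow> r \<in> E \<and> s \<in> Q \<and> src r = pstart s \<and> tgt r = pend tgt s"

lemma rep_path:
  assumes vs: "valid r s" and p: "P p" and i: "i < plen p" and pi: "snd p ! i = r"
  shows "P (rep s i p) \<and> pstart (rep s i p) = pstart p \<and> pend tgt (rep s i p) = pend tgt p"
proof -
  obtain v es where pv: "p = (v, es)" by force
  obtain w ss where sv: "s = (w, ss)" by force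
  have il: "i < length es" using i pv by (simp add: plen_def)
  define pre where "pre = take i es"
  define rest where "rest = drop (Suc i) es"
  have es: "es = pre @ r # rest" using id_take_nth_drop[OF il] pi pv
    by (simp add: pre_def rest_def)
  have rp: "rep s i p = (v, pre @ ss @ rest)" by (simp add: rep_def pv sv pre_def rest_def)
  let ?u = "pend tgt (v, pre)"
  have ch: "chain v (pre @ r # rest)" using p pv es by (simp add: is_path_chain)
  hence c1: "chain v pre" and c2: "src r = ?u" "r \<in> E" and c3: "chain (tgt r) rest"
    by (auto simp: chain_append)
  have sw: "w = src r" "pend tgt (w, ss) = tgt r" and cs: "chain w ss"
    using vs sv by (auto simp: valid_def pstart_def Q_iff is_path_chain)
  have "chain v (pre @ ss @ rest)"
    using c1 c3 cs sw c2 by (simp add: chain_append pend_append)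
  moreover have "pend tgt (v, pre @ ss @ rest) = pend tgt (v, pre @ r # rest)"
    using sw c2 by (simp add: pend_append pend_Cons)
  ultimately show ?thesis using rp pv es by (simp add: is_path_chain pstart_def)
qed

lemma rep_Q_iff:
  assumes "valid r s" "P p" "i < plen p" "snd p ! i = r"
  shows "rep s i p \<in> Q \<longleftrightarrow> p \<in> Q"
  using rep_path[OF assms] assms(2) complete by (metis Q_iff)

lemma rep_concat_left: "i < plen p \<Longrightarrow> rep s i (pconcat p q) = pconcat (rep s i p) q"
  by (simp add: rep_def pconcat_def plen_def)

lemma rep_concat_right: "rep s (plen p + j) (pconcat p q) = pconcat p (rep s j q)"
  by (simp add: rep_def pconcat_def plen_def)

lemma mul_if_left: "mul (if c then A else 0) B = (if c then mul A B else 0)"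
  and mul_if_right: "mul B (if c then A else 0) = (if c then mul B A else 0)"
  by (auto simp: amult_zero_left amult_zero_right)

lemma delta_Alg: "valid r s \<Longrightarrow> p \<in> Q \<Longrightarrow> delta r s p \<in> Al"
  unfolding delta_def
proof (rule sum_Alg)
  fix i assume vs: "valid r s" and p: "p \<in> Q" and "i \<in> {..<plen p}"
  hence i: "i < plen p" by simp
  show "(if snd p ! i = r then bvec (rep s i p) else 0) \<in> Al"
  proof (cases "snd p ! i = r")
    case True
    then show ?thesis using rep_Q_iff[OF vs _ i True] p by (simp add: Q_iff)
  qed simp
qed

lemma Drs_bvec: "p \<in> Q \<Longrightarrow> Drs r s (bvec p) = delta r s p"
proof -
  assume p: "p \<in> Q"
  have "(\<Sum>t\<in>Q. ascale (bvec p t) (delta r s t)) = (\<Sum>t\<in>Q. if t = p then delta r s t else 0)"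
    by (rule sum.cong) (auto simp: bvec_apply fun_eq_iff ascale_apply)
  also have "\<dots> = delta r s p" using p by (simp add: sum.delta' finite_Q)
  finally show ?thesis using p by (simp add: Drs_def)
qed

lemma Drs_zero: "Drs r s 0 = 0"
  by (simp add: Drs_def ascale_apply fun_eq_iff sum_fun_apply)

lemma Drs_linA: "linA (Drs r s)"
  unfolding linA_def
  by (auto simp: Drs_def fun_eq_iff sum_fun_apply ascale_apply algebra_simps sum.distrib sum_distrib_left)

lemma delta_concat:
  assumes "pend tgt p = pstart q"
  shows "delta r s (pconcat p q) =
    (\<Sum>i<plen p. if snd p ! i = r then bvec (rep s i (pconcat p q)) else 0) +
    (\<Sum>j<plen q. if snd q ! j = r then bvec (rep s (plen p + j) (pconcat p q)) else 0)"
proof -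
  have "plen (pconcat p q) = plen p + plen q" by (simp add: plen_def pconcat_def)
  then show ?thesis unfolding delta_def
    by (simp add: sum_lessThan_add)
      (auto simp: pconcat_def plen_def nth_append intro!: sum.cong)
qed

lemma Drs_leib_basis:
  assumes vs: "valid r s" and p: "p \<in> Q" and q: "q \<in> Q"
  shows "Drs r s (mul (bvec p) (bvec q) :: _ \<Rightarrow> 'k::field) = mul (Drs r s (bvec p)) (bvec q) + mul (bvec p) (Drs r s (bvec q))"
proof -
  let ?C = "pend tgt p = pstart q \<and> pconcat p q \<in> Q"
  have pp: "P p" "P q" using p q by (auto simp: Q_iff)
  have L: "mul (delta r s p) (bvec q :: _ \<Rightarrow> 'k) =
     (\<Sum>i<plen p. if snd p ! i = r then (if ?C then bvec (rep s i (pconcat p q)) else 0) else 0)"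
    unfolding delta_def amult_sum_left mul_if_left
  proof (rule sum.cong[OF refl])
    fix i assume "i \<in> {..<plen p}"
    hence i: "i < plen p" by simp
    show "(if snd p ! i = r then mul (bvec (rep s i p)) (bvec q) else 0) =
          (if snd p ! i = r then (if ?C then bvec (rep s i (pconcat p q)) else 0) else 0)"
    proof (cases "snd p ! i = r")
      case True
      have rp: "pend tgt (rep s i p) = pend tgt p" using rep_path[OF vs pp(1) i True] by simp
      have i2: "i < plen (pconcat p q)" and r2: "snd (pconcat p q) ! i = r"
        using i True by (auto simp: pconcat_def plen_def nth_append)
      have "pend tgt p = pstart q \<Longrightarrow> (rep s i (pconcat p q) \<in> Q \<longleftrightarrow> pconcat p q \<in> Q)"
        using rep_Q_iff[OF vs path_concat[OF pp] i2 r2] by simp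
      then show ?thesis using True rp i by (auto simp: mult_basis rep_concat_left)
    qed simp
  qed
  have R: "mul (bvec p) (delta r s q :: _ \<Rightarrow> 'k) =
     (\<Sum>j<plen q. if snd q ! j = r then (if ?C then bvec (rep s (plen p + j) (pconcat p q)) else 0) else 0)"
    unfolding delta_def amult_sum_right mul_if_right
  proof (rule sum.cong[OF refl])
    fix j assume "j \<in> {..<plen q}"
    hence j: "j < plen q" by simp
    show "(if snd q ! j = r then mul (bvec p) (bvec (rep s j q)) else 0) =
          (if snd q ! j = r then (if ?C then bvec (rep s (plen p + j) (pconcat p q)) else 0) else 0)"
    proof (cases "snd q ! j = r")
      case True
      have rq: "pstart (rep s j q) = pstart q" using rep_path[OF vs pp(2) j True] by simp
      have "pend tgt p = pstart q \<Longrightarrow> (rep s (plen p + j) (pconcat p q) \<in> Q \<longleftrightarrow> pconcat p q \<in> Q)"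
        using rep_Q_iff[OF vs path_concat[OF pp], of "plen p + j"] j True
        by (simp add: pconcat_def plen_def nth_append)
      then show ?thesis using True rq j by (auto simp: mult_basis rep_concat_right)
    qed simp
  qed
  show ?thesis
  proof (cases ?C)
    case True
    note C = this
    have L': "mul (delta r s p) (bvec q :: _ \<Rightarrow> 'k) = (\<Sum>i<plen p. if snd p ! i = r then bvec (rep s i (pconcat p q)) else 0)"
      unfolding L by (simp only: if_P[OF C])
    have R': "mul (bvec p) (delta r s q :: _ \<Rightarrow> 'k) = (\<Sum>j<plen q. if snd q ! j = r then bvec (rep s (plen p + j) (pconcat p q)) else 0)"
      unfolding R by (simp only: if_P[OF C])
    show ?thesis using p q True
      by (simp add: mult_basis Drs_bvec delta_concat L' R')
  next
    case False
    note C = this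
    have L': "mul (delta r s p) (bvec q) = (0 :: _ \<Rightarrow> 'k)" unfolding L by (simp only: if_not_P[OF C] if_cancel sum.neutral_const)
    have R': "mul (bvec p) (delta r s q) = (0 :: _ \<Rightarrow> 'k)" unfolding R by (simp only: if_not_P[OF C] if_cancel sum.neutral_const)
    have "mul (bvec p) (bvec q) = (0 :: _ \<Rightarrow> 'k)" unfolding mult_basis by (simp only: if_not_P[OF C])
    then show ?thesis using p q
      by (simp add: Drs_bvec Drs_zero L' R')
  qed
qed

lemma Drs_Der: "valid r s \<Longrightarrow> (Drs r s :: ('v,'e,'k::field) qmap) \<in> Dr"
proof -
  assume vs: "valid r s"
  have L: "linA (Drs r s)" by (rule Drs_linA)
  show ?thesis
  proof (rule DerI)
    fix x :: "('v,'e) qpath \<Rightarrow> 'k" assume "x \<in> Al"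
    then show "Drs r s x \<in> Al" unfolding Drs_def
      by (auto intro!: sum_Alg scale_Alg delta_Alg[OF vs])
  next
    fix x y :: "('v,'e) qpath \<Rightarrow> 'k" assume x: "x \<in> Al" and y: "y \<in> Al"
    have B: "\<And>p q. p \<in> Q \<Longrightarrow> q \<in> Q \<Longrightarrow> (Drs r s :: ('v,'e,'k) qmap) (mul (bvec p) (bvec q)) = mul (Drs r s (bvec p)) (bvec q) + mul (bvec p) (Drs r s (bvec q))"
      by (rule Drs_leib_basis[OF vs])
    show "Drs r s (mul x y) = mul (Drs r s x) y + mul x (Drs r s y)"
      by (rule leib_basis[OF L B x y])
  qed (use L in \<open>auto simp: linA_def Drs_def\<close>)
qed

end

context qa begin

lemma Drs_ev: "v \<in> V \<Longrightarrow> (Drs r s (ev v) :: _ \<Rightarrow> 'k::field) = 0"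
proof -
  assume v: "v \<in> V"
  have "(delta r s (vpath v) :: _ \<Rightarrow> 'k) = 0" by (simp add: delta_def plen_def vpath_def)
  then show ?thesis using v by (simp add: ev_def Drs_bvec vpath_Q)
qed

lemma Drs_apth: "valid r s \<Longrightarrow> e \<in> E \<Longrightarrow> (Drs r s (apth e) :: _ \<Rightarrow> 'k::field) = (if e = r then bvec s else 0)"
proof -
  assume vs: "valid r s" and e: "e \<in> E"
  have "(delta r s (apath src e) :: _ \<Rightarrow> 'k) = (if e = r then bvec (rep s 0 (apath src e)) else 0)"
    by (simp add: delta_def plen_def apath_def)
  moreover have "e = r \<Longrightarrow> rep s 0 (apath src e) = s"
    using vs by (cases s) (auto simp: rep_def apath_def valid_def pstart_def)
  ultimately show ?thesis using apath_Q[OF e] by (simp add: apth_def Drs_bvec)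
qed

lemma Dbar_eq:
  assumes vs: "valid r s"
  shows "Dbar V E src tgt Ip r s = (Drs r s :: ('v,'e,'k::field) qmap)"
  unfolding Dbar_def
proof (rule the_equality)
  let ?D = "Drs r s :: ('v,'e,'k) qmap"
  have h1: "\<forall>v\<in>V. ?D (bvec (vpath v)) = 0" by (simp add: ev_def[symmetric] Drs_ev)
  have h2: "?D (bvec (apath src r)) = bvec s" using vs by (simp add: apth_def[symmetric] Drs_apth[OF vs] valid_def)
  have h3: "\<forall>e\<in>E. e \<noteq> r \<longrightarrow> ?D (bvec (apath src e)) = 0" by (simp add: apth_def[symmetric] Drs_apth[OF vs])
  show "?D \<in> Dr \<and> (\<forall>v\<in>V. ?D (bvec (vpath v)) = 0) \<and>
    ?D (bvec (apath src r)) = bvec s \<and> (\<forall>e\<in>E. e \<noteq> r \<longrightarrow> ?D (bvec (apath src e)) = 0)"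
    using Drs_Der[OF vs] h1 h2 h3 by blast
next
  fix D :: "('v,'e,'k) qmap"
  assume h: "D \<in> Dr \<and> (\<forall>v\<in>V. D (bvec (vpath v)) = 0) \<and>
    D (bvec (apath src r)) = bvec s \<and> (\<forall>e\<in>E. e \<noteq> r \<longrightarrow> D (bvec (apath src e)) = 0)"
  have "D - Drs r s \<in> Dr"
    using h Drs_Der[OF vs] by (intro DS.subspace_diff[OF Der_subspace]) auto
  moreover have "\<And>v. v \<in> V \<Longrightarrow> (D - Drs r s) (ev v) = 0"
    using h Drs_ev by (simp add: ev_def)
  moreover have "\<And>e. e \<in> E \<Longrightarrow> (D - Drs r s) (apth e) = 0"
    using h by (auto simp: apth_def Drs_apth[OF vs, unfolded apth_def])
  ultimately have "D - Drs r s = 0" by (rule generators)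
  then show "D = Drs r s" by simp
qed

definition Pset :: "('e \<times> ('v,'e) qpath) set" where
  "Pset = {(r, s). valid r s}"

lemma finite_Pset: "finite Pset"
proof -
  have "Pset \<subseteq> E \<times> Q" by (auto simp: Pset_def valid_def)
  thus ?thesis using finE finite_Q by (meson finite_SigmaI finite_subset)
qed

definition QW :: "('v,'e) qpath set" where
  "QW = {q \<in> Q. snd q \<noteq> []}"

lemma finite_QW: "finite QW"
  using finite_Q by (simp add: QW_def)

lemma ev_apply_Q: "t \<in> Q \<Longrightarrow> ev z t = (if t = vpath z then 1 else 0)"
  by (simp add: ev_def bvec_apply)

lemma mul_ev_right: "y \<in> Al \<Longrightarrow> mul y (ev z) t = (if pend tgt t = z then y t else 0)"
  by (auto simp: vsupp_right[OF vsupp_ev] ev_vpath AlgD)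

lemma mul_ev_left: "y \<in> Al \<Longrightarrow> mul (ev z) y t = (if pstart t = z then y t else 0)"
  by (auto simp: vsupp_left[OF vsupp_ev] ev_vpath AlgD)

lemma ad_ev_apply: "w \<in> Al \<Longrightarrow> z \<in> V \<Longrightarrow>
   ad w (ev z) t = (if pend tgt t = z then w t else 0) - (if pstart t = z then w t else 0)"
  by (simp add: ad_def mul_ev_right mul_ev_left)

lemma Q_nonvertex: "t \<in> Q \<Longrightarrow> snd t \<noteq> [] \<Longrightarrow> pstart t \<noteq> pend tgt t"
  by (metis acyc Q_iff)

lemma W_zero:
  assumes w: "w \<in> Al" and wv: "\<And>q. snd q = [] \<Longrightarrow> w q = 0"
    and h: "\<And>z. z \<in> V \<Longrightarrow> ad w (ev z) = 0"
  shows "w = 0"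
proof (rule ext)
  fix t show "w t = 0 t"
  proof (cases "t \<in> Q \<and> snd t \<noteq> []")
    case True
    have "ad w (ev (pend tgt t)) t = 0" using h[of "pend tgt t"] True Q_endV by simp
    then show ?thesis using ad_ev_apply[OF w Q_endV, of t t] True Q_nonvertex[of t] by simp
  next
    case False
    then show ?thesis using wv AlgD[OF w] by (cases t) auto
  qed
qed

lemma ev_idem: "v \<in> V \<Longrightarrow> mul (ev v) (ev v) = ev v"
  by (simp add: ev_def mult_basis vpath_def pend_def pstart_def pconcat_def vpath_Q[unfolded vpath_def])

lemma ev_orth: "u \<noteq> z \<Longrightarrow> mul (ev u) (ev z) = 0"
  by (simp add: ev_def mult_basis vpath_def pend_def pstart_def)

lemma apth_left: "e \<in> E \<Longrightarrow> mul (ev (src e)) (apth e) = apth e"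
  using apath_Q[of e]
  by (simp add: ev_def apth_def mult_basis vpath_def pend_def pstart_def pconcat_def apath_def)

lemma apth_right: "e \<in> E \<Longrightarrow> mul (apth e) (ev (tgt e)) = apth e"
  using apath_Q[of e]
  by (simp add: ev_def apth_def mult_basis vpath_def pend_def pstart_def pconcat_def apath_def)

lemma apth_Alg: "e \<in> E \<Longrightarrow> apth e \<in> Al"
  by (simp add: apth_def apath_Q)

lemma Norm_support:
  assumes D: "D \<in> Dr" and hv: "\<And>v. v \<in> V \<Longrightarrow> D (ev v) = 0" and e: "e \<in> E"
    and nz: "D (apth e) t \<noteq> 0"
  shows "valid e t"
proof -
  have A: "D (apth e) \<in> Al" using DerD(2)[OF D apth_Alg[OF e]] .
  have tQ: "t \<in> Q" using nz AlgD[OF A] by blast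
  have "D (apth e) = D (mul (ev (src e)) (apth e))" by (simp only: apth_left[OF e])
  also have "\<dots> = mul (D (ev (src e))) (apth e) + mul (ev (src e)) (D (apth e))"
    by (rule DerD(5)[OF D ev_Alg[OF srcV[OF e]] apth_Alg[OF e]])
  finally have "D (apth e) = mul (D (ev (src e))) (apth e) + mul (ev (src e)) (D (apth e))" .
  hence "D (apth e) = mul (ev (src e)) (D (apth e))"
    using hv[OF srcV[OF e]] by (simp add: amult_zero_left)
  hence "D (apth e) t = (if pstart t = src e then D (apth e) t else 0)"
    using mul_ev_left[OF A] by metis
  hence s1: "pstart t = src e" using nz by (auto split: if_splits)
  have "D (apth e) = D (mul (apth e) (ev (tgt e)))" by (simp only: apth_right[OF e])
  also have "\<dots> = mul (D (apth e)) (ev (tgt e)) + mul (apth e) (D (ev (tgt e)))"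
    by (rule DerD(5)[OF D apth_Alg[OF e] ev_Alg[OF tgtV[OF e]]])
  finally have "D (apth e) = mul (D (apth e)) (ev (tgt e)) + mul (apth e) (D (ev (tgt e)))" .
  hence "D (apth e) = mul (D (apth e)) (ev (tgt e))"
    using hv[OF tgtV[OF e]] by (simp add: amult_zero_right)
  hence "D (apth e) t = (if pend tgt t = tgt e then D (apth e) t else 0)"
    using mul_ev_right[OF A] by metis
  hence s2: "pend tgt t = tgt e" using nz by (auto split: if_splits)
  show ?thesis using e tQ s1 s2 by (simp add: valid_def)
qed

abbreviation "B2 \<equiv> (\<lambda>(r,s). Drs r s) ` Pset"

lemma Der_span_sub: "DS.span (X :: ('v,'e,'k::field) qmap set) \<subseteq> Dr \<longleftrightarrow> X \<subseteq> Dr"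
  using DS.span_mono[of X Dr] Der_span DS.span_superset[of X] by blast

lemma B2_Der: "(B2 :: ('v,'e,'k::field) qmap set) \<subseteq> Dr"
  using Drs_Der by (auto simp: Pset_def)

lemma Norm_span:
  assumes D: "(D :: ('v,'e,'k::field) qmap) \<in> Dr" and hv: "\<And>v. v \<in> V \<Longrightarrow> D (ev v) = 0"
  shows "D \<in> DS.span B2"
proof -
  define D' where "D' = (\<Sum>x\<in>Pset. dscale (D (apth (fst x)) (snd x)) (Drs (fst x) (snd x) :: ('v,'e,'k) qmap))"
  have D'span: "D' \<in> DS.span B2"
    unfolding D'_def by (intro DS.span_sum DS.span_scale DS.span_base) force
  hence D'Der: "D' \<in> Dr" using Der_span_sub B2_Der by blast
  have "D - D' = 0"
  proof (rule generators)
    show "D - D' \<in> Dr" using D D'Der by (intro DS.subspace_diff[OF Der_subspace])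
  next
    fix v assume v: "v \<in> V"
    have "D' (ev v) = 0"
      unfolding D'_def using v by (simp add: sum_fun_apply dscale_apply Drs_ev fun_eq_iff ascale_apply)
    then show "(D - D') (ev v) = 0" using hv[OF v] by simp
  next
    fix e assume e: "e \<in> E"
    have "D' (apth e) = D (apth e)"
    proof (rule ext)
      fix t
      have "D' (apth e) t = (\<Sum>x\<in>Pset. if x = (e, t) then D (apth (fst x)) (snd x) else 0)"
        unfolding D'_def sum_fun_apply
      proof (rule sum.cong[OF refl])
        fix x assume "x \<in> Pset"
        then show "dscale (D (apth (fst x)) (snd x)) (Drs (fst x) (snd x)) (apth e) t =
          (if x = (e, t) then D (apth (fst x)) (snd x) else 0)"
          using e by (cases x) (auto simp: Pset_def dscale_apply ascale_apply Drs_apth bvec_apply)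
      qed
      also have "\<dots> = (if (e, t) \<in> Pset then D (apth e) t else 0)"
        by (simp add: sum.delta' finite_Pset)
      also have "\<dots> = D (apth e) t"
        using Norm_support[OF D hv e, of t] by (auto simp: Pset_def)
      finally show "D' (apth e) t = D (apth e) t" .
    qed
    then show "(D - D') (apth e) = 0" by simp
  qed
  hence "D = D'" by simp
  with D'span show ?thesis by simp
qed

end

lemma fam_indep:
  fixes g :: "'i \<Rightarrow> ('v,'e,'k::field) qmap"
  assumes fin: "finite I" and h: "\<And>c. (\<Sum>i\<in>I. dscale (c i) (g i)) = 0 \<Longrightarrow> \<forall>i\<in>I. c i = 0"
  shows "inj_on g I \<and> DS.independent (g ` I)"
proof
  show inj: "inj_on g I"
  proof (rule inj_onI, rule ccontr)
    fix i j assume i: "i \<in> I" and j: "j \<in> I" and gij: "g i = g j" and ne: "i \<noteq> j"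
    define c where "c = (\<lambda>k. if k = i then 1 else if k = j then - 1 else (0::'k))"
    have "(\<Sum>k\<in>I. dscale (c k) (g k)) = (\<Sum>k\<in>I. (if k = i then g i else 0) + (if k = j then - g j else 0))"
    proof (rule sum.cong[OF refl])
      fix k assume "k \<in> I"
      show "dscale (c k) (g k) = (if k = i then g i else 0) + (if k = j then - g j else 0)"
      proof (cases "k = i")
        case True
        then show ?thesis using ne by (simp add: c_def)
      next
        case False
        then show ?thesis by (cases "k = j") (simp_all add: c_def DS.scale_minus_left)
      qed
    qed
    also have "\<dots> = (\<Sum>k\<in>I. if k = i then g i else 0) + (\<Sum>k\<in>I. if k = j then - g j else 0)"
      by (rule sum.distrib)
    also have "\<dots> = g i + - g j" using i j fin by (simp only: sum.delta if_True)
    also have "\<dots> = g i - g j" by simp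
    also have "\<dots> = 0" using gij by simp
    finally have "\<forall>k\<in>I. c k = 0" by (rule h)
    hence "c i = 0" using i by blast
    thus False by (simp add: c_def)
  qed
  show "DS.independent (g ` I)"
  proof
    assume dep: "DS.dependent (g ` I)"
    have "\<exists>u. (\<exists>v\<in>g ` I. u v \<noteq> 0) \<and> (\<Sum>v\<in>g ` I. dscale (u v) v) = 0"
      using dep by (rule DS.dependent_finite[OF finite_imageI[OF fin], THEN iffD1])
    then obtain u where u1: "\<exists>v\<in>g ` I. u v \<noteq> 0" and u2: "(\<Sum>v\<in>g ` I. dscale (u v) v) = 0"
      by (elim exE conjE)
    have "(\<Sum>i\<in>I. dscale (u (g i)) (g i)) = (\<Sum>v\<in>g ` I. dscale (u v) v)"
      by (simp only: sum.reindex[OF inj] o_def)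
    hence "(\<Sum>i\<in>I. dscale (u (g i)) (g i)) = 0" using u2 by (rule trans)
    hence "\<forall>i\<in>I. u (g i) = 0" by (rule h)
    thus False using u1 by blast
  qed
qed

context qa begin

lemma XI:
  assumes D: "D \<in> Dr" and z: "z \<in> V"
  shows "D (ev z) t = (if pend tgt t = z then D (ev z) t else 0) + (if pstart t = z then D (ev z) t else 0)"
proof -
  have A: "D (ev z) \<in> Al" by (rule DerD(2)[OF D ev_Alg[OF z]])
  have "D (ev z) = D (mul (ev z) (ev z))" by (simp only: ev_idem[OF z])
  also have "\<dots> = mul (D (ev z)) (ev z) + mul (ev z) (D (ev z))"
    by (rule DerD(5)[OF D ev_Alg[OF z] ev_Alg[OF z]])
  finally have eq0: "D (ev z) = mul (D (ev z)) (ev z) + mul (ev z) (D (ev z))" .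
  have eq: "D (ev z) t = mul (D (ev z)) (ev z) t + mul (ev z) (D (ev z)) t"
    using fun_cong[OF eq0, of t] by (simp only: plus_fun_apply)
  have e1: "mul (D (ev z)) (ev z) t = (if pend tgt t = z then D (ev z) t else 0)" by (rule mul_ev_right[OF A])
  have e2: "mul (ev z) (D (ev z)) t = (if pstart t = z then D (ev z) t else 0)" by (rule mul_ev_left[OF A])
  from eq show ?thesis unfolding e1 e2 .
qed

lemma XO:
  assumes D: "D \<in> Dr" and u: "u \<in> V" and z: "z \<in> V" and uz: "u \<noteq> z"
  shows "(if pend tgt t = z then D (ev u) t else 0) + (if pstart t = u then D (ev z) t else 0) = 0"
proof -
  have Au: "D (ev u) \<in> Al" by (rule DerD(2)[OF D ev_Alg[OF u]])
  have Az: "D (ev z) \<in> Al" by (rule DerD(2)[OF D ev_Alg[OF z]])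
  have "0 = D (mul (ev u) (ev z))" using linA_zero[OF Der_linA[OF D]] by (simp only: ev_orth[OF uz])
  also have "\<dots> = mul (D (ev u)) (ev z) + mul (ev u) (D (ev z))"
    by (rule DerD(5)[OF D ev_Alg[OF u] ev_Alg[OF z]])
  finally have eq0: "0 = mul (D (ev u)) (ev z) + mul (ev u) (D (ev z))" .
  have eq: "0 = mul (D (ev u)) (ev z) t + mul (ev u) (D (ev z)) t"
    using fun_cong[OF eq0, of t] by (simp only: plus_fun_apply zero_fun_apply)
  have e1: "mul (D (ev u)) (ev z) t = (if pend tgt t = z then D (ev u) t else 0)" by (rule mul_ev_right[OF Au])
  have e2: "mul (ev u) (D (ev z)) t = (if pstart t = u then D (ev z) t else 0)" by (rule mul_ev_left[OF Az])
  from eq[symmetric] show ?thesis unfolding e1 e2 .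
qed

abbreviation "adW \<equiv> (\<lambda>q. ad (bvec q)) ` QW"

lemma expand_W:
  assumes w: "w \<in> Al" and wv: "\<And>q. snd q = [] \<Longrightarrow> w q = 0"
  shows "ad w = (\<Sum>q\<in>QW. dscale (w q) (ad (bvec q)))"
proof -
  have "w = (\<Sum>q\<in>QW. ascale (w q) (bvec q))"
  proof (rule ext)
    fix t
    have "(\<Sum>q\<in>QW. ascale (w q) (bvec q)) t = (\<Sum>q\<in>QW. if q = t then w q else 0)"
      by (auto simp: sum_fun_apply ascale_apply bvec_apply intro!: sum.cong)
    also have "\<dots> = w t" using finite_QW AlgD[OF w, of t] wv[of t] by (auto simp: sum.delta' QW_def)
    finally show "w t = (\<Sum>q\<in>QW. ascale (w q) (bvec q)) t" by simp
  qed
  hence "ad w = ad (\<Sum>q\<in>QW. ascale (w q) (bvec q))" by simp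
  also have "\<dots> = (\<Sum>q\<in>QW. dscale (w q) (ad (bvec q)))" by (simp add: ad_sum ad_scale)
  finally show ?thesis .
qed

lemma adW_span: "w \<in> Al \<Longrightarrow> (\<And>q. snd q = [] \<Longrightarrow> w q = 0) \<Longrightarrow> ad w \<in> DS.span adW"
  apply (subst expand_W, assumption, assumption)
  apply (rule DS.span_sum)
  apply (rule DS.span_scale)
  apply (rule DS.span_base)
  apply blast
  done

lemma Der_span_all:
  assumes D: "(D :: ('v,'e,'k::field) qmap) \<in> Dr"
  shows "D \<in> DS.span (B2 \<union> adW)"
proof -
  define w :: "('v,'e) qpath \<Rightarrow> 'k" where "w = (\<lambda>q. if q \<in> Q \<and> snd q \<noteq> [] then D (ev (pend tgt q)) q else 0)"
  have wA: "w \<in> Al" by (simp add: w_def Alg_iff)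
  have wv: "\<And>q. snd q = [] \<Longrightarrow> w q = 0" by (simp add: w_def)
  have key: "D (ev z) t = ad w (ev z) t" if z: "z \<in> V" for z t
  proof -
    have rhs: "ad w (ev z) t = (if pend tgt t = z then w t else 0) - (if pstart t = z then w t else 0)"
      by (rule ad_ev_apply[OF wA z])
    show ?thesis
    proof (cases "t \<in> Q")
      case False
      then show ?thesis using rhs AlgD[OF DerD(2)[OF D ev_Alg[OF z]]] by (simp add: w_def)
    next
      case tQ: True
      show ?thesis
      proof (cases "snd t = []")
        case True
        have "pstart t = pend tgt t" using True by (cases t) (simp add: pstart_def pend_def)
        have "D (ev z) t = 0"
        proof (cases "pstart t = z")
          case True
          hence "D (ev z) t = D (ev z) t + D (ev z) t" using XI[OF D z, of t] \<open>pstart t = pend tgt t\<close> by simp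
          thus ?thesis by (metis add_cancel_left_right)
        next
          case False
          thus ?thesis using XI[OF D z, of t] \<open>pstart t = pend tgt t\<close> by simp
        qed
        then show ?thesis using rhs wv[OF True] by simp
      next
        case False
        have ne: "pstart t \<noteq> pend tgt t" by (rule Q_nonvertex[OF tQ False])
        have wt: "w t = D (ev (pend tgt t)) t" using tQ False by (simp add: w_def)
        consider "z = pend tgt t" | "z = pstart t" | "z \<noteq> pend tgt t \<and> z \<noteq> pstart t" by blast
        then show ?thesis
        proof cases
          case 1 then show ?thesis using rhs wt ne by simp
        next
          case 2
          have h0: "D (ev (pstart t)) t + D (ev (pend tgt t)) t = 0"
            using XO[OF D Q_startV[OF tQ] Q_endV[OF tQ] ne, of t] by simp
          have "ad w (ev z) t = - w t" using rhs 2 ne by simp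
          moreover have "D (ev z) t = - D (ev (pend tgt t)) t" using h0 2 by (simp add: eq_neg_iff_add_eq_0)
          ultimately show ?thesis using wt by simp
        next
          case 3
          hence a: "pend tgt t \<noteq> z" and b: "pstart t \<noteq> z" by auto
          have "D (ev z) t = 0" using XI[OF D z, of t] by (simp only: if_not_P[OF a] if_not_P[OF b] add_0)
          then show ?thesis using a b rhs by simp
        qed
      qed
    qed
  qed
  have adwD: "ad w \<in> Dr" by (rule ad_Der[OF wA])
  have "D - ad w \<in> DS.span B2"
  proof (rule Norm_span)
    show "D - ad w \<in> Dr" using D adwD by (intro DS.subspace_diff[OF Der_subspace])
  next
    fix v assume "v \<in> V"
    then show "(D - ad w) (ev v) = 0" using key by (simp add: fun_eq_iff)
  qed
  hence "D - ad w \<in> DS.span (B2 \<union> adW)" using DS.span_mono[of B2 "B2 \<union> adW"] by blast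
  moreover have "ad w \<in> DS.span (B2 \<union> adW)"
    using adW_span[OF wA wv] DS.span_mono[of adW "B2 \<union> adW"] by blast
  ultimately have "(D - ad w) + ad w \<in> DS.span (B2 \<union> adW)" by (rule DS.span_add)
  then show ?thesis by simp
qed

end

context qa begin

lemma wpt: "(\<Sum>q\<in>QW. ascale (f q) (bvec q)) t = (if t \<in> QW then f t else (0::'k::field))"
proof -
  have "(\<Sum>q\<in>QW. ascale (f q) (bvec q)) t = (\<Sum>q\<in>QW. if q = t then f q else 0)"
    by (auto simp: sum_fun_apply ascale_apply bvec_apply intro!: sum.cong)
  also have "\<dots> = (if t \<in> QW then f t else 0)" using finite_QW by (simp add: sum.delta')
  finally show ?thesis .
qed

lemma QW_sub: "QW \<subseteq> Q" by (auto simp: QW_def)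

lemma W_part:
  fixes c :: "('v,'e) qpath \<Rightarrow> 'k::field"
  defines "w \<equiv> (\<Sum>q\<in>QW. ascale (c q) (bvec q))"
  assumes h: "\<And>z. z \<in> V \<Longrightarrow> ad w (ev z) = 0"
  shows "\<forall>q\<in>QW. c q = 0" and "ad w = 0"
proof -
  have wA: "w \<in> Al" unfolding w_def using QW_sub by (intro sum_Alg) auto
  have wv: "\<And>q. snd q = [] \<Longrightarrow> w q = 0" unfolding w_def wpt by (auto simp: QW_def)
  have "w = 0" by (rule W_zero[OF wA wv h])
  then show "\<forall>q\<in>QW. c q = 0" using wpt[of c] unfolding w_def by (metis zero_fun_apply)
  show "ad w = 0" using \<open>w = 0\<close> by (simp add: ad_zero)
qed

lemma ad_W_sum: "(\<Sum>q\<in>QW. dscale (c q) (ad (bvec q))) = ad (\<Sum>q\<in>QW. ascale (c q) (bvec q))"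
  by (simp add: ad_sum ad_scale)

definition gD :: "('e \<times> ('v,'e) qpath) + ('v,'e) qpath \<Rightarrow> ('v,'e,'k::field) qmap" where
  "gD i = (case i of Inl x \<Rightarrow> Drs (fst x) (snd x) | Inr q \<Rightarrow> ad (bvec q))"

definition gI :: "'v + ('v,'e) qpath \<Rightarrow> ('v,'e,'k::field) qmap" where
  "gI i = (case i of Inl v \<Rightarrow> ad (ev v) | Inr q \<Rightarrow> ad (bvec q))"

lemma Der_fam:
  assumes S: "(\<Sum>i\<in>Pset <+> QW. dscale (c i) (gD i :: ('v,'e,'k::field) qmap)) = 0"
  shows "\<forall>i\<in>Pset <+> QW. c i = 0"
proof -
  define S1 :: "('v,'e,'k) qmap" where "S1 = (\<Sum>x\<in>Pset. dscale (c (Inl x)) (Drs (fst x) (snd x)))"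
  define w :: "_ \<Rightarrow> 'k" where "w = (\<Sum>q\<in>QW. ascale (c (Inr q)) (bvec q))"
  have split: "S1 + ad w = 0"
    using S unfolding S1_def w_def ad_W_sum[symmetric]
    by (simp add: sum.Plus finite_Pset finite_QW gD_def o_def)
  have S1v: "S1 (ev z) = 0" if "z \<in> V" for z
    using that by (simp add: S1_def sum_fun_apply dscale_apply Drs_ev fun_eq_iff ascale_apply)
  have "ad w (ev z) = 0" if "z \<in> V" for z
  proof -
    have "(S1 + ad w) (ev z) = 0" using split by simp
    thus ?thesis using S1v[OF that] by simp
  qed
  hence W1: "\<forall>q\<in>QW. c (Inr q) = 0" and W2: "ad w = 0"
    using W_part[of "\<lambda>q. c (Inr q)"] unfolding w_def by blast+
  have S10: "S1 = 0" using split W2 by simp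
  have P1: "c (Inl x) = 0" if x: "x \<in> Pset" for x
  proof -
    define r where "r = fst x"
    define s where "s = snd x"
    have xrs: "x = (r, s)" by (simp add: r_def s_def)
    have vs: "valid r s" and rE: "r \<in> E" using x xrs by (auto simp: Pset_def valid_def)
    have "0 = S1 (apth r) s" using S10 by simp
    also have "\<dots> = (\<Sum>y\<in>Pset. if y = (r, s) then c (Inl y) else 0)"
      unfolding S1_def sum_fun_apply
    proof (rule sum.cong[OF refl])
      fix y assume "y \<in> Pset"
      then show "dscale (c (Inl y)) (Drs (fst y) (snd y)) (apth r) s = (if y = (r, s) then c (Inl y) else 0)"
        using rE by (cases y) (auto simp: Pset_def dscale_apply ascale_apply Drs_apth bvec_apply)
    qed
    also have "\<dots> = c (Inl x)" using x xrs finite_Pset by (simp add: sum.delta')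
    finally show ?thesis by simp
  qed
  show ?thesis using W1 P1 by auto
qed

lemma connected_const:
  assumes conn: "connected_quiver V E src tgt" and f: "\<And>e. e \<in> E \<Longrightarrow> f (src e) = f (tgt e)"
    and u: "u \<in> V" and w: "w \<in> V"
  shows "f u = f w"
proof -
  let ?R = "{(src e, tgt e) | e. e \<in> E} \<union> {(tgt e, src e) | e. e \<in> E}"
  have "(u, w) \<in> ?R\<^sup>*" using conn u w unfolding connected_quiver_def by blast
  then show ?thesis
  proof (induction rule: rtrancl_induct)
    case (step y z)
    then show ?case using f by auto
  qed simp
qed

lemma Inn_fam:
  assumes conn: "connected_quiver V E src tgt" and v0: "v0 \<in> V"
  assumes S: "(\<Sum>i\<in>(V - {v0}) <+> QW. dscale (c i) (gI i :: ('v,'e,'k::field) qmap)) = 0"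
  shows "\<forall>i\<in>(V - {v0}) <+> QW. c i = 0"
proof -
  define cc where "cc = (\<lambda>v. if v \<in> V - {v0} then c (Inl v) else 0)"
  define a :: "_ \<Rightarrow> 'k" where "a = (\<Sum>v\<in>V - {v0}. ascale (c (Inl v)) (ev v))"
  have apt: "a t = (if snd t = [] then cc (fst t) else 0)" for t
  proof -
    have "a t = (\<Sum>v\<in>V - {v0}. if v = fst t then (if snd t = [] then c (Inl v) else 0) else 0)"
      unfolding a_def sum_fun_apply
      by (rule sum.cong) (auto simp: ascale_apply ev_def bvec_apply vpath_def prod_eq_iff)
    also have "\<dots> = (if snd t = [] then cc (fst t) else 0)"
      using finV by (simp add: sum.delta cc_def)
    finally show ?thesis .
  qed
  have aA: "a \<in> Al" unfolding a_def by (intro sum_Alg) auto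
  have av: "vsupp a" using apt by (simp add: vsupp_def)
  define w :: "_ \<Rightarrow> 'k" where "w = (\<Sum>q\<in>QW. ascale (c (Inr q)) (bvec q))"
  have split: "ad a + ad w = 0"
    using S unfolding a_def w_def ad_W_sum[symmetric]
    by (simp add: sum.Plus finV finite_QW gI_def o_def ad_sum ad_scale)
  have S1v: "ad a (ev z) = 0" if z: "z \<in> V" for z
  proof (rule ext)
    fix t
    have "ad a (ev z) t = (if pend tgt t = z then a t else 0) - (if pstart t = z then a t else 0)"
      by (rule ad_ev_apply[OF aA z])
    moreover have "snd t = [] \<Longrightarrow> pend tgt t = pstart t" by (cases t) (simp add: pend_def pstart_def)
    ultimately show "ad a (ev z) t = 0 t" using apt[of t] by auto
  qed
  have "ad w (ev z) = 0" if "z \<in> V" for z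
  proof -
    have "(ad a + ad w) (ev z) = 0" using split by simp
    thus ?thesis using S1v[OF that] by simp
  qed
  hence W1: "\<forall>q\<in>QW. c (Inr q) = 0" and W2: "ad w = 0"
    using W_part[of "\<lambda>q. c (Inr q)"] unfolding w_def by blast+
  have a0: "ad a = 0" using split W2 by simp
  have edge: "cc (src e) = cc (tgt e)" if e: "e \<in> E" for e
  proof -
    have aQ: "apath src e \<in> Q" by (rule apath_Q[OF e])
    have "0 = ad a (apth e) (apath src e)" using a0 by simp
    also have "\<dots> = mul a (apth e) (apath src e) - mul (apth e) a (apath src e)"
      by (simp add: ad_def apth_Alg[OF e])
    also have "\<dots> = a (vpath (src e)) - a (vpath (tgt e))"
      using aQ by (simp add: vsupp_left[OF av] vsupp_right[OF av] apth_def bvec_apply pstart_def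
          apath_def pend_def)
    also have "\<dots> = cc (src e) - cc (tgt e)" by (simp add: apt vpath_def)
    finally show ?thesis by simp
  qed
  have V1: "c (Inl v) = 0" if "v \<in> V - {v0}" for v
  proof -
    have "cc v = cc v0" using that by (intro connected_const[OF conn edge _ v0]) auto
    thus ?thesis using that by (simp add: cc_def)
  qed
  show ?thesis using W1 V1 by auto
qed

end

context qa begin

lemma Inn_span:
  assumes v0: "v0 \<in> V" and a: "(a :: _ \<Rightarrow> 'k::field) \<in> Al"
  shows "ad a \<in> DS.span (gI ` ((V - {v0}) <+> QW))"
proof -
  let ?Sp = "DS.span (gI ` ((V - {v0}) <+> QW) :: ('v,'e,'k) qmap set)"
  have adW_in: "ad (bvec q) \<in> ?Sp" if "q \<in> QW" for q
  proof (rule DS.span_base)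
    show "ad (bvec q) \<in> gI ` ((V - {v0}) <+> QW)"
      using that by (force simp: gI_def intro: image_eqI[where x="Inr q"])
  qed
  have adV_in: "ad (ev v) \<in> ?Sp" if "v \<in> V - {v0}" for v
  proof (rule DS.span_base)
    show "ad (ev v) \<in> gI ` ((V - {v0}) <+> QW)"
      using that by (force simp: gI_def intro: image_eqI[where x="Inl v"])
  qed
  have "(\<Sum>v\<in>V. ad (ev v)) = (ad one :: ('v,'e,'k) qmap)" by (simp add: one_def ad_sum)
  also have "\<dots> = 0" by (rule ad_one)
  finally have s0: "(\<Sum>v\<in>V. ad (ev v)) = (0 :: ('v,'e,'k) qmap)" .
  have "(\<Sum>v\<in>V. ad (ev v)) = ad (ev v0) + (\<Sum>v\<in>V - {v0}. (ad (ev v) :: ('v,'e,'k) qmap))"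
    using finV v0 by (rule sum.remove)
  hence "ad (ev v0) = - (\<Sum>v\<in>V - {v0}. (ad (ev v) :: ('v,'e,'k) qmap))" using s0
    by (simp add: eq_neg_iff_add_eq_0)
  moreover have "(\<Sum>v\<in>V - {v0}. (ad (ev v) :: ('v,'e,'k) qmap)) \<in> ?Sp"
    by (rule DS.span_sum) (rule adV_in)
  ultimately have adv0: "ad (ev v0) \<in> ?Sp" by (simp add: DS.span_neg)
  have basis_in: "ad (bvec q) \<in> ?Sp" if q: "q \<in> Q" for q
  proof (cases "snd q = []")
    case False
    then show ?thesis using q by (intro adW_in) (simp add: QW_def)
  next
    case True
    have eq: "(bvec q :: _ \<Rightarrow> 'k) = ev (fst q)" using True by (cases q) (simp add: ev_def vpath_def)
    have fV: "fst q \<in> V" using q True by (cases q) (auto simp: Q_iff is_path_def)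
    show ?thesis
    proof (cases "fst q = v0")
      case True then show ?thesis using adv0 eq by simp
    next
      case False then show ?thesis using adV_in[of "fst q"] fV eq by simp
    qed
  qed
  have "ad a = ad (\<Sum>q\<in>Q. ascale (a q) (bvec q))" using alg_expand[OF a] by simp
  also have "\<dots> = (\<Sum>q\<in>Q. dscale (a q) (ad (bvec q)))" by (simp add: ad_sum ad_scale)
  finally show ?thesis
    by (simp only:) (intro DS.span_sum DS.span_scale basis_in)
qed

lemma main:
  assumes conn: "connected_quiver V E src tgt"
  shows "hh1_dim TYPE('k::field) V E src tgt Ip
           = int (card (B2bar V E src tgt Ip :: ('v,'e,'k) qmap set)) + 1 - int (card V)"
proof -
  obtain v0 where v0: "v0 \<in> V" using conn unfolding connected_quiver_def by blast
  let ?ID = "Pset <+> QW" and ?II = "(V - {v0}) <+> QW"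
  have finD: "finite ?ID" using finite_Pset finite_QW by simp
  have finI: "finite ?II" using finV finite_QW by simp
  have famD: "inj_on (gD :: _ \<Rightarrow> ('v,'e,'k) qmap) ?ID \<and> DS.independent (gD ` ?ID :: ('v,'e,'k) qmap set)"
    by (rule fam_indep[OF finD Der_fam])
  have famI: "inj_on (gI :: _ \<Rightarrow> ('v,'e,'k) qmap) ?II \<and> DS.independent (gI ` ?II :: ('v,'e,'k) qmap set)"
    by (rule fam_indep[OF finI Inn_fam[OF conn v0]])
  have imD: "gD ` ?ID = (B2 \<union> adW :: ('v,'e,'k) qmap set)"
  proof -
    have c1: "(gD :: _ \<Rightarrow> ('v,'e,'k) qmap) \<circ> Inl = (\<lambda>(r,s). Drs r s)" by (auto simp: gD_def fun_eq_iff)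
    have c2: "(gD :: _ \<Rightarrow> ('v,'e,'k) qmap) \<circ> Inr = (\<lambda>q. ad (bvec q))" by (simp add: gD_def fun_eq_iff)
    show ?thesis by (simp only: Plus_def image_Un image_comp c1 c2)
  qed
  have subD: "gD ` ?ID \<subseteq> (Dr :: ('v,'e,'k) qmap set)"
    by (auto simp: gD_def Pset_def intro!: Drs_Der ad_Der bvec_Alg dest: subsetD[OF QW_sub])
  have spD: "(Dr :: ('v,'e,'k) qmap set) \<subseteq> DS.span (gD ` ?ID)"
    using Der_span_all imD by auto
  have dimD: "card (gD ` ?ID :: ('v,'e,'k) qmap set) = DS.dim (Dr :: ('v,'e,'k) qmap set)"
    by (rule DS.basis_card_eq_dim[OF subD spD conjunct2[OF famD]])
  have cD: "card (gD ` ?ID :: ('v,'e,'k) qmap set) = card Pset + card QW"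
    using card_image[OF conjunct1[OF famD]] card_Plus[OF finite_Pset finite_QW] by simp
  have subI: "gI ` ?II \<subseteq> (Inn V E src tgt Ip :: ('v,'e,'k) qmap set)"
    unfolding Inn_eq by (auto simp: gI_def intro!: imageI bvec_Alg dest: subsetD[OF QW_sub])
  have spI: "(Inn V E src tgt Ip :: ('v,'e,'k) qmap set) \<subseteq> DS.span (gI ` ?II)"
    unfolding Inn_eq using Inn_span[OF v0] by auto
  have dimI: "card (gI ` ?II :: ('v,'e,'k) qmap set) = DS.dim (Inn V E src tgt Ip :: ('v,'e,'k) qmap set)"
    by (rule DS.basis_card_eq_dim[OF subI spI conjunct2[OF famI]])
  have cI: "card (gI ` ?II :: ('v,'e,'k) qmap set) = (card V - 1) + card QW"
    using card_image[OF conjunct1[OF famI]] card_Plus[of "V - {v0}" QW] finV finite_QW v0 by simp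
  have B2eq: "(B2bar V E src tgt Ip :: ('v,'e,'k) qmap set) = B2"
  proof (rule set_eqI)
    fix D :: "('v,'e,'k) qmap"
    show "D \<in> B2bar V E src tgt Ip \<longleftrightarrow> D \<in> B2"
    proof
      assume "D \<in> B2bar V E src tgt Ip"
      then obtain r s where D: "D = Dbar V E src tgt Ip r s" and vs: "valid r s"
        unfolding B2bar_def valid_def by blast
      have "D = Drs r s" using D Dbar_eq[OF vs] by simp
      moreover have "(r, s) \<in> Pset" using vs by (simp add: Pset_def)
      ultimately show "D \<in> B2" by (force intro: image_eqI[where x="(r,s)"])
    next
      assume "D \<in> B2"
      then obtain r s where D: "D = Drs r s" and vs: "valid r s"
        by (auto simp: Pset_def)
      have "D = Dbar V E src tgt Ip r s" by (simp add: D Dbar_eq[OF vs])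
      then show "D \<in> B2bar V E src tgt Ip" using vs unfolding B2bar_def valid_def by blast
    qed
  qed
  have injB: "inj_on (\<lambda>(r,s). (Drs r s :: ('v,'e,'k) qmap)) Pset"
  proof (rule inj_onI)
    fix x y assume x: "x \<in> Pset" and y: "y \<in> Pset"
      and e: "(\<lambda>(r,s). (Drs r s :: ('v,'e,'k) qmap)) x = (\<lambda>(r,s). Drs r s) y"
    have "(gD (Inl x) :: ('v,'e,'k) qmap) = gD (Inl y)" using e by (cases x, cases y) (simp add: gD_def)
    hence "Inl x = (Inl y :: _ + ('v,'e) qpath)"
      by (rule inj_onD[OF conjunct1[OF famD]]) (use x y in auto)
    thus "x = y" by simp
  qed
  have cB: "card (B2bar V E src tgt Ip :: ('v,'e,'k) qmap set) = card Pset"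
    using B2eq injB by (simp add: card_image)
  have cV: "card V \<ge> 1" using v0 finV by (metis One_nat_def Suc_leI card_gt_0_iff empty_iff)
  show ?thesis
    unfolding hh1_dim_def using dimD cD dimI cI cB cV by simp
qed

end

theorem corollary4p6:
  fixes V :: "'v set" and E :: "'e set" and src tgt :: "'e \<Rightarrow> 'v"
    and Ip :: "('v,'e) qpath set"
  assumes "finite_quiver V E src tgt"
    and "connected_quiver V E src tgt"
    and "path_ideal_in_R2 V E src tgt Ip"
    and "complete_alg V E src tgt Ip"
    and "acyclic_alg V E src tgt Ip"
  shows "hh1_dim TYPE('k::field) V E src tgt Ip
           = int (card (B2bar V E src tgt Ip :: ('v,'e,'k) qmap set)) + 1 - int (card V)"
proof -
  interpret qa V E src tgt Ip using assms by unfold_locales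
  show ?thesis by (rule main[OF assms(2)])
qed

end
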